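(* Let $A\subseteq\mathcal{R}$ be S-measurable. Then $A$ can be written as a disjoint union $A=\left(\bigcup_{n=1}^\infty K_n\right)\cup S$, where each $K_n$ is an interval in $\mathcal{R}$, the $K_n$ are pairwise disjoint, $\sum_{n=1}^\infty l(K_n)$ converges in $\mathcal{R}$ with $\sum_{n=1}^\infty l(K_n)=M_s(A)$, and $S$ is S-measurable with $M_s(S)=0$.
   Context: The Levi-Civita field $\mathcal{R}$ is the set of functions $x:\mathbb{Q}\to\mathbb{R}$ with left-finite support (for every $q\in\mathbb{Q}$ only finitely many points of the support are smaller than $q$), with componentwise addition and formal power series (Cauchy product) multiplication. It is an ordered field extending $\mathbb{R}$, where $x>0$ iff $x\neq 0$ and $x[\min\operatorname{supp}(x)]>0$. Limits and infinite sums in $\mathcal{R}$ are taken in the order topology, in which $\mathcal{R}$ is Cauchy complete; a series $\sum a_n$ converges iff $a_n\to 0$. An interval is a set of the form $[a,b],[a,b),(a,b]$ or $(a,b)$ with $a<b$ in $\mathcal{R}$; its length is $l=b-a$. A set $A\subseteq\mathcal{R}$ is S-measurable if for every $\epsilon>0$ in $\mathcal{R}$ there are sequences of pairwise disjoint intervals $(I_n)$ and $(J_n)$ with $\bigcup_n I_n\subseteq A\subseteq\bigcup_n J_n$, both $\sum_n l(I_n)$ and $\sum_n l(J_n)$ convergent in $\mathcal{R}$, and $\sum_n l(J_n)-\sum_n l(I_n)\le\epsilon$. For such $A$, the S-measure $M_s(A)$ is the common value of $\lim_{k\to\infty}\sum_n l(I^k_n)=\lim_{k\to\infty}\sum_n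 l(J^k_n)$ for any such inner/outer sequences with gap at most $d^k$, where $d\in\mathcal{R}$ is given by $d[1]=1$ and $d[t]=0$ for $t\neq 1$; equivalently $M_s(A)$ is both the supremum of $\sum l(I_n)$ over inner disjoint interval families and the infimum of $\sum l(J_n)$ over outer ones. *)

theory Defs
  imports Complex_Main
begin

typedef lc = "{x :: rat \<Rightarrow> real. \<forall>q. finite {t. x t \<noteq> 0 \<and> t < q}}"
  morphisms coeff Abs_lc
  by (intro exI[of _ "\<lambda>_. 0"]) auto

setup_lifting type_definition_lc

lemma lc_left_finite_add:
  assumes "\<forall>q. finite {t. (x::rat\<Rightarrow>real) t \<noteq> 0 \<and> t < q}"
      and "\<forall>q. finite {t. (y::rat\<Rightarrow>real) t \<noteq> 0 \<and> t < q}"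
  shows "\<forall>q. finite {t. x t + y t \<noteq> 0 \<and> t < q}"
proof
  fix q
  have "{t. x t + y t \<noteq> 0 \<and> t < q} \<subseteq> {t. x t \<noteq> 0 \<and> t < q} \<union> {t. y t \<noteq> 0 \<and> t < q}"
    by auto
  then show "finite {t. x t + y t \<noteq> 0 \<and> t < q}"
    using assms finite_subset by blast
qed

instantiation lc :: "{zero, plus, uminus, minus}"
begin
lift_definition zero_lc :: lc is "\<lambda>_. 0" by auto
lift_definition plus_lc :: "lc \<Rightarrow> lc \<Rightarrow> lc" is "\<lambda>x y t. x t + y t"
  using lc_left_finite_add by blast
lift_definition uminus_lc :: "lc \<Rightarrow> lc" is "\<lambda>x t. - x t" by simp
lift_definition minus_lc :: "lc \<Rightarrow> lc \<Rightarrow> lc" is "\<lambda>x y t. x t - y t"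
proof -
  fix x y :: "rat \<Rightarrow> real" and q :: rat
  assume "\<And>q. finite {t. x t \<noteq> 0 \<and> t < q}" "\<And>q. finite {t. y t \<noteq> 0 \<and> t < q}"
  then have "\<forall>q. finite {t. x t + - y t \<noteq> 0 \<and> t < q}"
    by (intro lc_left_finite_add) simp_all
  then show "finite {t. x t - y t \<noteq> 0 \<and> t < q}" by simp
qed
instance ..
end

definition lc_pos :: "lc \<Rightarrow> bool" where
  "lc_pos x \<longleftrightarrow> (\<exists>t. coeff x t > 0 \<and> (\<forall>s<t. coeff x s = 0))"

instantiation lc :: ord
begin
definition less_lc :: "lc \<Rightarrow> lc \<Rightarrow> bool" where
  "less_lc x y \<longleftrightarrow> lc_pos (y - x)"
definition less_eq_lc :: "lc \<Rightarrow> lc \<Rightarrow> bool" where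
  "less_eq_lc x y \<longleftrightarrow> lc_pos (y - x) \<or> x = y"
instance ..
end

definition lc_abs :: "lc \<Rightarrow> lc" where
  "lc_abs x = (if 0 \<le> x then x else - x)"

definition lc_tendsto :: "(nat \<Rightarrow> lc) \<Rightarrow> lc \<Rightarrow> bool" where
  "lc_tendsto a L \<longleftrightarrow> (\<forall>\<epsilon>>0. \<exists>N. \<forall>n\<ge>N. lc_abs (a n - L) < \<epsilon>)"

primrec lc_psum :: "(nat \<Rightarrow> lc) \<Rightarrow> nat \<Rightarrow> lc" where
  "lc_psum a 0 = 0"
| "lc_psum a (Suc n) = lc_psum a n + a n"

definition lc_sums :: "(nat \<Rightarrow> lc) \<Rightarrow> lc \<Rightarrow> bool" where
  "lc_sums a s \<longleftrightarrow> lc_tendsto (lc_psum a) s"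

definition lc_interval :: "lc set \<Rightarrow> bool" where
  "lc_interval I \<longleftrightarrow> (\<exists>a b. a < b \<and>
      (I = {x. a \<le> x \<and> x \<le> b} \<or> I = {x. a \<le> x \<and> x < b} \<or>
       I = {x. a < x \<and> x \<le> b} \<or> I = {x. a < x \<and> x < b}))"

definition lc_len :: "lc set \<Rightarrow> lc" where
  "lc_len I = (if I = {} then 0 else
     (THE l. \<exists>a b. a < b \<and> l = b - a \<and>
      (I = {x. a \<le> x \<and> x \<le> b} \<or> I = {x. a \<le> x \<and> x < b} \<or>
       I = {x. a < x \<and> x \<le> b} \<or> I = {x. a < x \<and> x < b})))"

text \<open>A (countable) family of pairwise disjoint intervals, indexed by nat; members are
  allowed to be empty so that finite families (including the empty family) are covered.\<close>
definition lc_ivl_family :: "(nat \<Rightarrow> lc set) \<Rightarrow> bool" where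
  "lc_ivl_family I \<longleftrightarrow> (\<forall>n. I n = {} \<or> lc_interval (I n)) \<and>
      (\<forall>m n. m \<noteq> n \<longrightarrow> I m \<inter> I n = {})"

definition inner_sums :: "lc set \<Rightarrow> lc set" where
  "inner_sums A = {s. \<exists>I. lc_ivl_family I \<and> (\<Union>n. I n) \<subseteq> A \<and> lc_sums (\<lambda>n. lc_len (I n)) s}"

definition outer_sums :: "lc set \<Rightarrow> lc set" where
  "outer_sums A = {s. \<exists>J. lc_ivl_family J \<and> A \<subseteq> (\<Union>n. J n) \<and> lc_sums (\<lambda>n. lc_len (J n)) s}"

definition S_measurable :: "lc set \<Rightarrow> bool" where
  "S_measurable A \<longleftrightarrow> (\<forall>\<epsilon>>0. \<exists>sI\<in>inner_sums A. \<exists>sJ\<in>outer_sums A. sJ - sI \<le> \<epsilon>)"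

definition lc_is_sup :: "lc set \<Rightarrow> lc \<Rightarrow> bool" where
  "lc_is_sup X m \<longleftrightarrow> (\<forall>x\<in>X. x \<le> m) \<and> (\<forall>u. (\<forall>x\<in>X. x \<le> u) \<longrightarrow> m \<le> u)"

definition lc_is_inf :: "lc set \<Rightarrow> lc \<Rightarrow> bool" where
  "lc_is_inf X m \<longleftrightarrow> (\<forall>x\<in>X. m \<le> x) \<and> (\<forall>u. (\<forall>x\<in>X. u \<le> x) \<longrightarrow> u \<le> m)"

definition S_measure :: "lc set \<Rightarrow> lc" where
  "S_measure A = (THE m. lc_is_sup (inner_sums A) m \<and> lc_is_inf (outer_sums A) m)"

end

theory Submission
  imports Defs "HOL-Analysis.Continuum_Not_Denumerable"
begin


lemma coeff_lf: "finite {t. coeff x t \<noteq> 0 \<and> t < q}"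
  using coeff[of x] by auto

lemma coeff_add[simp]: "coeff (x + y) t = coeff x t + coeff y t" by transfer simp
lemma coeff_diff[simp]: "coeff (x - y) t = coeff x t - coeff y t" by transfer simp
lemma coeff_uminus[simp]: "coeff (- x) t = - coeff x t" by transfer simp
lemma coeff_zero[simp]: "coeff 0 t = 0" by transfer simp

instance lc :: ab_group_add
  by standard (transfer; force simp: algebra_simps)+

lemma lc_eqI: "(\<And>t. coeff x t = coeff y t) \<Longrightarrow> x = y"
  by (simp add: coeff_inject[symmetric] fun_eq_iff)

lemma lead_exists:
  assumes "x \<noteq> 0"
  shows "\<exists>t. coeff x t \<noteq> 0 \<and> (\<forall>s<t. coeff x s = 0)"
proof -
  obtain t0 where t0: "coeff x t0 \<noteq> 0"
    using assms lc_eqI[of x 0] by auto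
  define F where "F = {t. coeff x t \<noteq> 0 \<and> t < t0 + 1}"
  have fF: "finite F" unfolding F_def by (rule coeff_lf)
  have "t0 \<in> F" using t0 unfolding F_def by auto
  hence ne: "F \<noteq> {}" by auto
  let ?t = "Min F"
  have "?t \<in> F" using fF ne by simp
  moreover have "\<forall>s<?t. coeff x s = 0"
  proof (intro allI impI, rule ccontr)
    fix s assume s: "s < ?t" "coeff x s \<noteq> 0"
    have "?t \<le> t0" using \<open>t0 \<in> F\<close> fF by simp
    hence "s \<in> F" using s unfolding F_def by auto
    hence "?t \<le> s" using fF by simp
    thus False using s by simp
  qed
  ultimately show ?thesis unfolding F_def by blast
qed

lemma lc_pos_add: assumes "lc_pos x" "lc_pos y" shows "lc_pos (x + y)"
proof -
  obtain tx where tx: "coeff x tx > 0" "\<forall>s<tx. coeff x s = 0" using assms(1) unfolding lc_pos_def by blast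
  obtain ty where ty: "coeff y ty > 0" "\<forall>s<ty. coeff y s = 0" using assms(2) unfolding lc_pos_def by blast
  show ?thesis unfolding lc_pos_def
  proof (intro exI[of _ "min tx ty"] conjI allI impI)
    show "coeff (x + y) (min tx ty) > 0"
      using tx ty by (cases tx ty rule: linorder_cases) (auto simp: min_def)
  next
    fix s assume "s < min tx ty" thus "coeff (x + y) s = 0" using tx ty by simp
  qed
qed

lemma lc_pos_zero[simp]: "\<not> lc_pos 0" unfolding lc_pos_def by simp

lemma lc_pos_neg: assumes "lc_pos x" shows "\<not> lc_pos (- x)"
proof
  assume "lc_pos (-x)"
  then obtain ty where ty: "coeff x ty < 0" "\<forall>s<ty. coeff x s = 0" unfolding lc_pos_def by auto
  obtain tx where tx: "coeff x tx > 0" "\<forall>s<tx. coeff x s = 0" using assms unfolding lc_pos_def by blast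
  show False using tx ty by (cases tx ty rule: linorder_cases) force+
qed

lemma lc_pos_total: "x \<noteq> 0 \<Longrightarrow> lc_pos x \<or> lc_pos (- x)"
  using lead_exists[of x] unfolding lc_pos_def
  by (metis coeff_uminus linorder_neqE_linordered_idom neg_0_less_iff_less neg_equal_0_iff_equal)

instance lc :: linordered_ab_group_add
proof
  fix x y z :: lc
  show "(x < y) = (x \<le> y \<and> \<not> y \<le> x)" unfolding less_lc_def less_eq_lc_def
    by (metis lc_pos_neg lc_pos_zero minus_diff_eq right_minus_eq)
  show "x \<le> x" unfolding less_eq_lc_def by simp
  show "x \<le> y \<Longrightarrow> y \<le> z \<Longrightarrow> x \<le> z" unfolding less_eq_lc_def
    by (metis diff_add_cancel add_diff_eq lc_pos_add)
  show "x \<le> y \<Longrightarrow> y \<le> x \<Longrightarrow> x = y" unfolding less_eq_lc_def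
    by (metis lc_pos_neg minus_diff_eq)
  show "x \<le> y \<or> y \<le> x" unfolding less_eq_lc_def
    by (metis lc_pos_total minus_diff_eq right_minus_eq)
  show "x \<le> y \<Longrightarrow> z + x \<le> z + y" unfolding less_eq_lc_def by simp
qed

lemma pos_iff: "0 < x \<longleftrightarrow> lc_pos x" unfolding less_lc_def by simp


lift_definition mon :: "real \<Rightarrow> rat \<Rightarrow> lc" is "\<lambda>c e t. if t = e then c else 0"
proof -
  fix c :: real and e q :: rat
  have "{t. (if t = e then c else 0) \<noteq> 0 \<and> t < q} \<subseteq> {e}" by auto
  thus "finite {t. (if t = e then c else 0) \<noteq> 0 \<and> t < q}" using finite_subset by blast
qed

lemma coeff_mono[simp]: "coeff (mon c e) t = (if t = e then c else 0)" by transfer simp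

lemma mono_add: "mon c e + mon c' e = mon (c + c') e" by (rule lc_eqI) simp
lemma mono_diff: "mon c e - mon c' e = mon (c - c') e" by (rule lc_eqI) simp
lemma mono_zero[simp]: "mon 0 e = 0" by (rule lc_eqI) simp

definition vb :: "rat \<Rightarrow> lc \<Rightarrow> bool" where "vb k y \<longleftrightarrow> (\<forall>s<k. coeff y s = 0)"

lemma pos_by_lead: "coeff x t > 0 \<Longrightarrow> (\<forall>s<t. coeff x s = 0) \<Longrightarrow> 0 < x"
  unfolding pos_iff lc_pos_def by blast

lemma mono_pos: "c > 0 \<Longrightarrow> 0 < mon c e"
  by (rule pos_by_lead[of _ e]) auto

lemma mono_less: "c < c' \<Longrightarrow> mon c e < mon c' e"
  using mono_pos[of "c' - c" e] by (simp add: mono_diff[symmetric])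

lemma mono_le: "c \<le> c' \<Longrightarrow> mon c e \<le> mon c' e"
  using mono_less[of c c' e] by (cases "c = c'") auto

lemma mono_less_exp: "c > 0 \<Longrightarrow> e < e' \<Longrightarrow> mon c' e' < mon c e"
  by (subst diff_gt_0_iff_gt[symmetric], rule pos_by_lead[of _ e]) auto

lemma lead_pos:
  assumes "0 < x"
  shows "\<exists>e p. p > 0 \<and> coeff x e = p \<and> vb e x"
  using assms unfolding pos_iff lc_pos_def vb_def by blast

lemma mono_less_lead: "0 < c \<Longrightarrow> c < coeff x e \<Longrightarrow> vb e x \<Longrightarrow> mon c e < x"
  by (subst diff_gt_0_iff_gt[symmetric], rule pos_by_lead[of _ e]) (auto simp: vb_def)


lift_definition half :: "lc \<Rightarrow> lc" is "\<lambda>x t. x t / 2"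
  by simp

lemma coeff_half[simp]: "coeff (half x) t = coeff x t / 2" by transfer simp

lemma half_half[simp]: "half x + half x = x" by (rule lc_eqI) simp

lemma half_pos: "0 < x \<Longrightarrow> 0 < half x"
  unfolding pos_iff lc_pos_def by auto

lemma half_less: "0 < x \<Longrightarrow> half x < x"
  using half_pos[of x] half_half[of x] by (metis add_less_cancel_left add.right_neutral)

lemma vb_less:
  assumes "coeff \<epsilon> e > 0" "vb e \<epsilon>" "e < k" "vb k y"
  shows "y < \<epsilon>"
  using assms by (subst diff_gt_0_iff_gt[symmetric], intro pos_by_lead[of _ e]) (auto simp: vb_def)

lemma vb_uminus[simp]: "vb k (- y) = vb k y" unfolding vb_def by simp

lemma vb_diff: "vb k x \<Longrightarrow> vb k y \<Longrightarrow> vb k (x - y)" unfolding vb_def by simp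

lemma lc_abs_less_iff: "lc_abs x < e \<longleftrightarrow> x < e \<and> - x < e"
proof -
  have a: "- x < e" if "0 \<le> x" "x < e" for x e :: lc
    using that by (meson le_less_trans neg_le_0_iff_le order.trans)
  show ?thesis using a[of x e] a[of "-x" e] by (auto simp: not_le lc_abs_def)
qed

lemma lc_abs_ge0: "0 \<le> lc_abs x" unfolding lc_abs_def by auto

lemma lc_abs_commute: "lc_abs (x - y) = lc_abs (y - x)"
  unfolding lc_abs_def by auto

lemma vb_abs_less:
  assumes "coeff \<epsilon> e > 0" "vb e \<epsilon>" "e < k" "vb k y"
  shows "lc_abs y < \<epsilon>"
  using vb_less[OF assms] vb_less[OF assms(1-3), of "-y"] assms(4)
  by (simp add: lc_abs_less_iff)

lemma vb_mono: "k \<le> k' \<Longrightarrow> vb k (mon c k')" unfolding vb_def by auto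

lemma abs_small_vb:
  assumes "lc_abs y < mon 1 k"
  shows "vb k y"
proof (rule ccontr)
  assume nv: "\<not> vb k y"
  then obtain s where s: "s < k" "coeff y s \<noteq> 0" unfolding vb_def by auto
  hence "y \<noteq> 0" by auto
  then obtain t where t: "coeff y t \<noteq> 0" "\<forall>s<t. coeff y s = 0" using lead_exists by blast
  have "t \<le> s" using t s by (meson not_le)
  hence tk: "t < k" using s by simp
  have yl: "y < mon 1 k" "- y < mon 1 k" using assms lc_abs_less_iff by auto
  show False
  proof (cases "coeff y t > 0")
    case True
    have "0 < y - mon 1 k" using tk t True by (intro pos_by_lead[of _ t]) auto
    thus False using yl by simp
  next
    case False
    hence "coeff (- y) t > 0" using t by simp
    have "0 < - y - mon 1 k" using tk t False by (intro pos_by_lead[of _ t]) auto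
    thus False using yl by simp
  qed
qed

lemma exists_lead: "0 < x \<Longrightarrow> \<exists>e. coeff x e > 0 \<and> vb e x"
  using lead_pos by blast


lemma abs_tri: "lc_abs x < e1 \<Longrightarrow> lc_abs y < e2 \<Longrightarrow> lc_abs (x + y) < e1 + e2"
  unfolding lc_abs_less_iff using add_strict_mono by fastforce

lemma lc_tendsto_const: "lc_tendsto (\<lambda>n. c) c"
  unfolding lc_tendsto_def lc_abs_def by auto

lemma lc_tendsto_add:
  assumes "lc_tendsto a A" "lc_tendsto b B"
  shows "lc_tendsto (\<lambda>n. a n + b n) (A + B)"
  unfolding lc_tendsto_def
proof (intro allI impI)
  fix \<epsilon> :: lc assume e: "0 < \<epsilon>"
  obtain N1 where N1: "\<forall>n\<ge>N1. lc_abs (a n - A) < half \<epsilon>" using assms(1) half_pos[OF e] unfolding lc_tendsto_def by blast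
  obtain N2 where N2: "\<forall>n\<ge>N2. lc_abs (b n - B) < half \<epsilon>" using assms(2) half_pos[OF e] unfolding lc_tendsto_def by blast
  show "\<exists>N. \<forall>n\<ge>N. lc_abs (a n + b n - (A + B)) < \<epsilon>"
  proof (intro exI[of _ "max N1 N2"] allI impI)
    fix n assume "max N1 N2 \<le> n"
    hence "lc_abs ((a n - A) + (b n - B)) < half \<epsilon> + half \<epsilon>" using N1 N2 by (intro abs_tri) auto
    thus "lc_abs (a n + b n - (A + B)) < \<epsilon>" by (simp add: algebra_simps)
  qed
qed

lemma lc_tendsto_uminus:
  assumes "lc_tendsto a A" shows "lc_tendsto (\<lambda>n. - a n) (- A)"
  using assms unfolding lc_tendsto_def lc_abs_less_iff by (simp add: algebra_simps) (metis add.commute)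

lemma lc_tendsto_diff:
  assumes "lc_tendsto a A" "lc_tendsto b B"
  shows "lc_tendsto (\<lambda>n. a n - b n) (A - B)"
  using lc_tendsto_add[OF assms(1) lc_tendsto_uminus[OF assms(2)]] by simp

lemma lc_tendsto_le:
  assumes "lc_tendsto a A" "lc_tendsto b B" "\<forall>n\<ge>N0. a n \<le> b n"
  shows "A \<le> B"
proof (rule ccontr)
  assume "\<not> A \<le> B"
  hence d: "0 < A - B" by simp
  let ?h = "half (A - B)"
  obtain N1 where N1: "\<forall>n\<ge>N1. lc_abs (a n - A) < ?h" using assms(1) half_pos[OF d] unfolding lc_tendsto_def by blast
  obtain N2 where N2: "\<forall>n\<ge>N2. lc_abs (b n - B) < ?h" using assms(2) half_pos[OF d] unfolding lc_tendsto_def by blast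
  let ?n = "max N0 (max N1 N2)"
  have "A - a ?n < ?h" "b ?n - B < ?h" using N1 N2 unfolding lc_abs_less_iff by auto
  hence "A - a ?n + (b ?n - B) < ?h + ?h" by (rule add_strict_mono)
  moreover have "a ?n \<le> b ?n" using assms(3) by auto
  ultimately show False by (simp add: algebra_simps)
qed

lemma lc_tendsto_unique: "lc_tendsto a A \<Longrightarrow> lc_tendsto a B \<Longrightarrow> A = B"
  using lc_tendsto_le[of a A a B 0] lc_tendsto_le[of a B a A 0] by auto

lemma lc_tendsto_squeeze:
  assumes "lc_tendsto a L" "lc_tendsto b L" "\<forall>n\<ge>N0. a n \<le> x n \<and> x n \<le> b n"
  shows "lc_tendsto x L"
  unfolding lc_tendsto_def
proof (intro allI impI)
  fix \<epsilon> :: lc assume e: "0 < \<epsilon>"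
  obtain N1 where N1: "\<forall>n\<ge>N1. lc_abs (a n - L) < \<epsilon>" using assms(1) e unfolding lc_tendsto_def by blast
  obtain N2 where N2: "\<forall>n\<ge>N2. lc_abs (b n - L) < \<epsilon>" using assms(2) e unfolding lc_tendsto_def by blast
  show "\<exists>N. \<forall>n\<ge>N. lc_abs (x n - L) < \<epsilon>"
  proof (intro exI[of _ "max N0 (max N1 N2)"] allI impI)
    fix n assume n: "max N0 (max N1 N2) \<le> n"
    hence "L - a n < \<epsilon>" "b n - L < \<epsilon>" "a n \<le> x n" "x n \<le> b n" using N1 N2 assms(3) unfolding lc_abs_less_iff by auto
    thus "lc_abs (x n - L) < \<epsilon>" unfolding lc_abs_less_iff
      by (metis diff_right_mono le_less_trans minus_diff_eq diff_left_mono)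
  qed
qed

definition lc_cauchy :: "(nat \<Rightarrow> lc) \<Rightarrow> bool" where
  "lc_cauchy x \<longleftrightarrow> (\<forall>\<epsilon>>0. \<exists>N. \<forall>i\<ge>N. \<forall>j\<ge>N. lc_abs (x i - x j) < \<epsilon>)"

lemma conv_cauchy: "lc_tendsto x L \<Longrightarrow> lc_cauchy x"
  unfolding lc_cauchy_def
proof (intro allI impI)
  fix \<epsilon> :: lc assume e: "0 < \<epsilon>" "lc_tendsto x L"
  obtain N where N: "\<forall>n\<ge>N. lc_abs (x n - L) < half \<epsilon>" using e half_pos[OF e(1)] unfolding lc_tendsto_def by blast
  show "\<exists>N. \<forall>i\<ge>N. \<forall>j\<ge>N. lc_abs (x i - x j) < \<epsilon>"
  proof (intro exI[of _ N] allI impI)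
    fix i j assume "N \<le> i" "N \<le> j"
    hence "lc_abs ((x i - L) + (L - x j)) < half \<epsilon> + half \<epsilon>"
      using N lc_abs_commute[of L "x j"] by (intro abs_tri) auto
    thus "lc_abs (x i - x j) < \<epsilon>" by simp
  qed
qed

lemma nat_ceil_gt: "(t::rat) < of_nat (nat \<lceil>t\<rceil> + 1)"
proof -
  have "t \<le> of_int \<lceil>t\<rceil>" by simp
  moreover have "(of_int \<lceil>t\<rceil>::rat) \<le> of_nat (nat \<lceil>t\<rceil>)" by (cases "\<lceil>t\<rceil> \<ge> 0") auto
  ultimately show ?thesis by linarith
qed

lemma cauchy_conv:
  assumes "lc_cauchy x"
  shows "\<exists>L. lc_tendsto x L"
proof -
  have "\<forall>k::nat. \<exists>N. \<forall>i\<ge>N. \<forall>j\<ge>N. lc_abs (x i - x j) < mon 1 (of_nat k)"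
    using assms mono_pos[of 1] unfolding lc_cauchy_def by auto
  then obtain N :: "nat \<Rightarrow> nat" where N: "\<And>k i j. N k \<le> i \<Longrightarrow> N k \<le> j \<Longrightarrow> lc_abs (x i - x j) < mon 1 (of_nat k)"
    by metis
  define M where "M k = Max (N ` {..k})" for k
  have MN: "N j \<le> M k" if "j \<le> k" for j k unfolding M_def using that by (intro Max_ge) auto
  have Mmono: "M j \<le> M k" if "j \<le> k" for j k unfolding M_def using that
    by (intro Max_mono) auto
  have agree: "coeff (x i) s = coeff (x j) s" if "M k \<le> i" "M k \<le> j" "s < of_nat k" for i j k s
  proof -
    have "lc_abs (x i - x j) < mon 1 (of_nat k)" using N MN[of k k] that by force
    hence "vb (of_nat k) (x i - x j)" by (rule abs_small_vb)
    thus ?thesis using that(3) unfolding vb_def by simp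
  qed
  define kk where "kk t = nat \<lceil>t\<rceil> + 1" for t :: rat
  have kk: "t < of_nat (kk t)" for t unfolding kk_def by (rule nat_ceil_gt)
  define cf where "cf t = coeff (x (M (kk t))) t" for t
  have cf_eq: "coeff (x i) s = cf s" if "M k \<le> i" "s < of_nat k" for i k s
  proof -
    let ?k = "min k (kk s)"
    have "M ?k \<le> i" using that Mmono[of ?k k] by simp
    moreover have "M ?k \<le> M (kk s)" using Mmono by simp
    moreover have "s < of_nat ?k" using that kk[of s] by (simp add: min_def)
    ultimately show ?thesis unfolding cf_def by (rule agree)
  qed
  have lf: "finite {t. cf t \<noteq> 0 \<and> t < q}" for q
  proof -
    have "{t. cf t \<noteq> 0 \<and> t < q} \<subseteq> {t. coeff (x (M (kk q))) t \<noteq> 0 \<and> t < q}"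
      using cf_eq[of "kk q" "M (kk q)"] kk[of q] by auto
    thus ?thesis using coeff_lf finite_subset by blast
  qed
  define L where "L = Abs_lc cf"
  have cL: "coeff L = cf" unfolding L_def using lf by (simp add: Abs_lc_inverse)
  have "lc_tendsto x L" unfolding lc_tendsto_def
  proof (intro allI impI)
    fix \<epsilon> :: lc assume "0 < \<epsilon>"
    then obtain e where e: "coeff \<epsilon> e > 0" "vb e \<epsilon>" using exists_lead by blast
    show "\<exists>N. \<forall>n\<ge>N. lc_abs (x n - L) < \<epsilon>"
    proof (intro exI[of _ "M (kk e)"] allI impI)
      fix n assume n: "M (kk e) \<le> n"
      have "vb (of_nat (kk e)) (x n - L)" unfolding vb_def using cf_eq[OF n] cL by simp
      thus "lc_abs (x n - L) < \<epsilon>" using vb_abs_less[OF e kk[of e]] by simp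
    qed
  qed
  thus ?thesis by blast
qed


lemma psum_eq: "lc_psum a n = (\<Sum>i<n. a i)" by (induction n) (auto simp: add.commute)

lemma psum_mono: "(\<And>n. 0 \<le> a n) \<Longrightarrow> i \<le> j \<Longrightarrow> lc_psum a i \<le> lc_psum a j"
proof (induction j)
  case (Suc j) thus ?case
  proof (cases "i = Suc j")
    case False
    hence "lc_psum a i \<le> lc_psum a j" using Suc by (simp add: le_Suc_eq)
    also have "\<dots> \<le> lc_psum a j + a j" using Suc.prems(1)[of j] by simp
    finally show ?thesis by simp
  qed simp
qed simp

lemma psum_nonneg: "(\<And>n. 0 \<le> a n) \<Longrightarrow> 0 \<le> lc_psum a n"
  using psum_mono[of a 0 n] by simp

lemma lc_tendsto_reindex:
  assumes "lc_tendsto a L" "\<And>N. \<exists>M. \<forall>n\<ge>M. N \<le> g n"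
  shows "lc_tendsto (\<lambda>n. a (g n)) L"
  unfolding lc_tendsto_def
proof (intro allI impI)
  fix \<epsilon>::lc assume "0 < \<epsilon>"
  then obtain N where N: "\<forall>n\<ge>N. lc_abs (a n - L) < \<epsilon>" using assms(1) unfolding lc_tendsto_def by blast
  obtain M where M: "\<forall>n\<ge>M. N \<le> g n" using assms(2) by blast
  show "\<exists>M. \<forall>n\<ge>M. lc_abs (a (g n) - L) < \<epsilon>"
  proof (intro exI[of _ M] allI impI)
    fix n assume "M \<le> n" hence "N \<le> g n" using M by simp
    thus "lc_abs (a (g n) - L) < \<epsilon>" using N by simp
  qed
qed

lemma sums_ge_psum:
  assumes "\<And>n. 0 \<le> a n" "lc_sums a s"
  shows "lc_psum a n \<le> s"
  by (rule lc_tendsto_le[OF lc_tendsto_const assms(2)[unfolded lc_sums_def], of n]) (simp add: psum_mono[OF assms(1)])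

lemma sums_nonneg: "(\<And>n. 0 \<le> a n) \<Longrightarrow> lc_sums a s \<Longrightarrow> 0 \<le> s"
  using sums_ge_psum[of a s 0] by simp

lemma psum_le: "(\<And>n. a n \<le> b n) \<Longrightarrow> lc_psum a n \<le> lc_psum b n"
  by (induction n) (auto intro: add_mono)

lemma sums_le: "(\<And>n. a n \<le> b n) \<Longrightarrow> lc_sums a s \<Longrightarrow> lc_sums b t \<Longrightarrow> s \<le> t"
  unfolding lc_sums_def using lc_tendsto_le[of "lc_psum a" s "lc_psum b" t 0] psum_le[of a b] by metis

lemma psum_add: "lc_psum (\<lambda>n. a n + b n) k = lc_psum a k + lc_psum b k"
  by (induction k) (auto simp: algebra_simps)

lemma psum_diff: "lc_psum (\<lambda>n. a n - b n) k = lc_psum a k - lc_psum b k"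
  by (induction k) (auto simp: algebra_simps)

lemma sums_add: "lc_sums a s \<Longrightarrow> lc_sums b t \<Longrightarrow> lc_sums (\<lambda>n. a n + b n) (s + t)"
  unfolding lc_sums_def psum_add by (rule lc_tendsto_add)

lemma sums_diff: "lc_sums a s \<Longrightarrow> lc_sums b t \<Longrightarrow> lc_sums (\<lambda>n. a n - b n) (s - t)"
  unfolding lc_sums_def psum_diff by (rule lc_tendsto_diff)

lemma sums_zero: "lc_sums (\<lambda>n. 0) 0"
proof -
  have "lc_psum (\<lambda>n. 0) k = 0" for k by (induction k) auto
  hence "lc_psum (\<lambda>n. 0) = (\<lambda>k. 0)" by auto
  thus ?thesis unfolding lc_sums_def using lc_tendsto_const by metis
qed

lemma sums_finite_sum:
  assumes "finite S" "\<And>i. i \<in> S \<Longrightarrow> lc_sums (f i) (s i)"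
  shows "lc_sums (\<lambda>m. \<Sum>i\<in>S. f i m) (\<Sum>i\<in>S. s i)"
  using assms
proof (induction S rule: finite_induct)
  case empty thus ?case using sums_zero by simp
next
  case (insert x F)
  have 1: "lc_sums (f x) (s x)" using insert.prems by simp
  have 2: "lc_sums (\<lambda>m. \<Sum>i\<in>F. f i m) (sum s F)" by (rule insert.IH) (simp add: insert.prems)
  have "lc_sums (\<lambda>m. f x m + (\<Sum>i\<in>F. f i m)) (s x + sum s F)"
    by (rule sums_add[OF 1 2])
  thus ?case using insert.hyps by simp
qed

lemma sums_finite:
  assumes "\<And>n. n \<ge> N \<Longrightarrow> a n = 0"
  shows "lc_sums a (lc_psum a N)"
proof -
  have eq: "lc_psum a n = lc_psum a N" if "n \<ge> N" for n using that
  proof (induction n)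
    case (Suc n) show ?case
    proof (cases "Suc n = N")
      case False hence "n \<ge> N" using Suc.prems by simp
      thus ?thesis using Suc.IH assms[of n] by simp
    qed simp
  qed simp
  have h: "\<forall>n\<ge>N. lc_psum a n - lc_psum a N = 0"
  proof (intro allI impI)
    fix n assume "N \<le> n" from eq[OF this] show "lc_psum a n - lc_psum a N = 0" by (simp only: diff_self)
  qed
  show ?thesis unfolding lc_sums_def lc_tendsto_def
  proof (intro allI impI)
    fix \<epsilon> :: lc assume e: "0 < \<epsilon>"
    show "\<exists>N'. \<forall>n\<ge>N'. lc_abs (lc_psum a n - lc_psum a N) < \<epsilon>"
    proof (intro exI[of _ N] allI impI)
      fix n assume "N \<le> n" hence "lc_psum a n - lc_psum a N = 0" using h by blast
      thus "lc_abs (lc_psum a n - lc_psum a N) < \<epsilon>" using e by (simp add: lc_abs_def)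
    qed
  qed
qed

lemma sums_term_small:
  assumes "lc_sums a s" "0 < \<epsilon>"
  shows "\<exists>N. \<forall>m\<ge>N. lc_abs (a m) < \<epsilon>"
proof -
  obtain N where N: "\<forall>i\<ge>N. \<forall>j\<ge>N. lc_abs (lc_psum a i - lc_psum a j) < \<epsilon>"
    using conv_cauchy[OF assms(1)[unfolded lc_sums_def]] assms(2) unfolding lc_cauchy_def by blast
  show ?thesis
  proof (intro exI[of _ N] allI impI)
    fix m assume "N \<le> m"
    thus "lc_abs (a m) < \<epsilon>" using N[rule_format, of "Suc m" m] by simp
  qed
qed

lemma psum_diff_dom:
  assumes "\<And>n. 0 \<le> a n \<and> a n \<le> b n" "j \<le> i"
  shows "0 \<le> lc_psum a i - lc_psum a j \<and> lc_psum a i - lc_psum a j \<le> lc_psum b i - lc_psum b j"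
  using assms(2)
proof (induction i)
  case (Suc i)
  show ?case
  proof (cases "j = Suc i")
    case False
    hence "j \<le> i" using Suc by simp
    hence ih: "0 \<le> lc_psum a i - lc_psum a j" "lc_psum a i - lc_psum a j \<le> lc_psum b i - lc_psum b j" using Suc by auto
    have e1: "lc_psum a (Suc i) - lc_psum a j = (lc_psum a i - lc_psum a j) + a i" by (simp add: algebra_simps)
    have e2: "lc_psum b (Suc i) - lc_psum b j = (lc_psum b i - lc_psum b j) + b i" by (simp add: algebra_simps)
    have h1: "0 \<le> (lc_psum a i - lc_psum a j) + a i" using ih assms(1)[of i] by (intro add_nonneg_nonneg) auto
    have h2: "(lc_psum a i - lc_psum a j) + a i \<le> (lc_psum b i - lc_psum b j) + b i"
      using ih assms(1)[of i] by (intro add_mono) auto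
    show ?thesis unfolding e1 e2 using h1 h2 by blast
  qed simp
qed simp

lemma sums_dominated:
  assumes "\<And>n. 0 \<le> a n \<and> a n \<le> b n" "lc_sums b t"
  shows "\<exists>s. lc_sums a s \<and> s \<le> t"
proof -
  have "lc_cauchy (lc_psum a)" unfolding lc_cauchy_def
  proof (intro allI impI)
    fix \<epsilon>::lc assume "0 < \<epsilon>"
    then obtain N where N: "\<forall>i\<ge>N. \<forall>j\<ge>N. lc_abs (lc_psum b i - lc_psum b j) < \<epsilon>"
      using conv_cauchy[OF assms(2)[unfolded lc_sums_def]] unfolding lc_cauchy_def by blast
    have *: "lc_abs (lc_psum a i - lc_psum a j) < \<epsilon>" if "N \<le> i" "N \<le> j" "j \<le> i" for i j
    proof -
      have "0 \<le> lc_psum a i - lc_psum a j" "lc_psum a i - lc_psum a j \<le> lc_psum b i - lc_psum b j"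
        using psum_diff_dom[OF assms(1) that(3)] by auto
      moreover have "lc_psum b i - lc_psum b j < \<epsilon>" using N that unfolding lc_abs_less_iff by blast
      ultimately show ?thesis unfolding lc_abs_less_iff by (meson le_less_trans neg_le_0_iff_le order.trans)
    qed
    show "\<exists>N. \<forall>i\<ge>N. \<forall>j\<ge>N. lc_abs (lc_psum a i - lc_psum a j) < \<epsilon>"
    proof (intro exI[of _ N] allI impI)
      fix i j assume ij: "N \<le> i" "N \<le> j"
      show "lc_abs (lc_psum a i - lc_psum a j) < \<epsilon>"
      proof (cases "j \<le> i")
        case True thus ?thesis using * ij by blast
      next
        case False thus ?thesis using *[of j i] ij lc_abs_commute by auto
      qed
    qed
  qed
  then obtain s where s: "lc_sums a s" using cauchy_conv unfolding lc_sums_def by blast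
  moreover have "s \<le> t" using sums_le[OF _ s assms(2)] assms(1) by blast
  ultimately show ?thesis by blast
qed

lemma interleave_sums:
  assumes "\<And>m. 0 \<le> p m" "\<And>m. 0 \<le> q m" "lc_sums (\<lambda>m. p m + q m) s"
  shows "lc_sums (\<lambda>n. if even n then p (n div 2) else q (n div 2)) s"
proof -
  define r where "r n = (if even n then p (n div 2) else q (n div 2))" for n
  let ?pq = "\<lambda>m. p m + q m"
  have ev: "lc_psum r (2 * M) = lc_psum ?pq M" for M
    by (induction M) (auto simp: r_def algebra_simps)
  have bnd: "lc_psum ?pq (n div 2) \<le> lc_psum r n \<and> lc_psum r n \<le> lc_psum ?pq ((n + 1) div 2)" for n
  proof (cases "even n")
    case True then obtain M where "n = 2 * M" by blast
    thus ?thesis using ev by simp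
  next
    case False then obtain M where M: "n = 2 * M + 1" using oddE by blast
    have "lc_psum r n = lc_psum ?pq M + p M" using M ev[of M] by (simp add: r_def)
    moreover have "(n + 1) div 2 = Suc M" "n div 2 = M" using M by auto
    ultimately show ?thesis using assms(1,2)[of M] by (auto simp: add_increasing2)
  qed
  have t1: "lc_tendsto (\<lambda>n. lc_psum ?pq (n div 2)) s"
  proof (rule lc_tendsto_reindex[OF assms(3)[unfolded lc_sums_def]])
    fix N :: nat show "\<exists>M. \<forall>n\<ge>M. N \<le> n div 2" by (rule exI[of _ "2*N"]) auto
  qed
  have t2: "lc_tendsto (\<lambda>n. lc_psum ?pq ((n + 1) div 2)) s"
  proof (rule lc_tendsto_reindex[OF assms(3)[unfolded lc_sums_def]])
    fix N :: nat show "\<exists>M. \<forall>n\<ge>M. N \<le> (n + 1) div 2" by (rule exI[of _ "2*N"]) auto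
  qed
  show ?thesis unfolding lc_sums_def r_def[symmetric]
    using lc_tendsto_squeeze[OF t1 t2, of 0] bnd by blast
qed


definition ivl :: "lc \<Rightarrow> lc \<Rightarrow> bool \<Rightarrow> bool \<Rightarrow> lc set" where
  "ivl a b ca cb = {x. (if ca then a \<le> x else a < x) \<and> (if cb then x \<le> b else x < b)}"

definition iv0 :: "lc set \<Rightarrow> bool" where "iv0 J \<longleftrightarrow> J = {} \<or> lc_interval J"

lemma lc_interval_ivl: "lc_interval J \<longleftrightarrow> (\<exists>a b ca cb. a < b \<and> J = ivl a b ca cb)"
proof
  assume "lc_interval J"
  then obtain a b where ab: "a < b" and d: "J = {x. a \<le> x \<and> x \<le> b} \<or> J = {x. a \<le> x \<and> x < b} \<or>
       J = {x. a < x \<and> x \<le> b} \<or> J = {x. a < x \<and> x < b}" unfolding lc_interval_def by blast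
  have "ivl a b True True = {x. a \<le> x \<and> x \<le> b}" "ivl a b True False = {x. a \<le> x \<and> x < b}"
       "ivl a b False True = {x. a < x \<and> x \<le> b}" "ivl a b False False = {x. a < x \<and> x < b}"
    unfolding ivl_def by simp_all
  thus "\<exists>a b ca cb. a < b \<and> J = ivl a b ca cb" using d ab by metis
next
  assume "\<exists>a b ca cb. a < b \<and> J = ivl a b ca cb"
  then obtain a b ca cb where ab: "a < b" and J: "J = ivl a b ca cb" by blast
  have "J = {x. a \<le> x \<and> x \<le> b} \<or> J = {x. a \<le> x \<and> x < b} \<or>
       J = {x. a < x \<and> x \<le> b} \<or> J = {x. a < x \<and> x < b}"
    unfolding J ivl_def by (cases ca; cases cb) simp_all
  thus "lc_interval J" unfolding lc_interval_def using ab by blast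
qed

lemma mid: "a < b \<Longrightarrow> a < a + half (b - a) \<and> a + half (b - a) < b"
proof -
  assume "a < b" hence d: "0 < b - a" by simp
  have "half (b - a) < b - a" using half_less[OF d] .
  hence "a + half (b - a) < a + (b - a)" by (rule add_strict_left_mono)
  thus ?thesis using half_pos[OF d] by simp
qed

lemma dense_lc: "(a::lc) < b \<Longrightarrow> \<exists>z. a < z \<and> z < b" using mid by (intro exI[of _ "a + half (b - a)"]) auto

lemma ivl_sandwich: "a < x \<Longrightarrow> x < b \<Longrightarrow> x \<in> ivl a b ca cb"
  "x \<in> ivl a b ca cb \<Longrightarrow> a \<le> x" "x \<in> ivl a b ca cb \<Longrightarrow> x \<le> b"
  unfolding ivl_def by (auto split: if_splits)

lemma sandwich_unique:
  fixes a b a' :: lc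
  assumes "a < b" "\<And>x. a < x \<Longrightarrow> x < b \<Longrightarrow> x \<in> J" "\<And>x. x \<in> J \<Longrightarrow> a' \<le> x"
  shows "a' \<le> a"
proof (rule ccontr)
  assume "\<not> a' \<le> a" hence "a < min a' b" using assms(1) by (simp add: not_le)
  then obtain z where z: "a < z" "z < min a' b" using dense_lc by blast
  hence "z \<in> J" using assms(2) by simp
  thus False using assms(3) z by fastforce
qed

lemma sandwich_unique2:
  fixes a b b' :: lc
  assumes "a < b" "\<And>x. a < x \<Longrightarrow> x < b \<Longrightarrow> x \<in> J" "\<And>x. x \<in> J \<Longrightarrow> x \<le> b'"
  shows "b \<le> b'"
proof (rule ccontr)
  assume "\<not> b \<le> b'" hence "max a b' < b" using assms(1) by (simp add: not_le)
  then obtain z where z: "max a b' < z" "z < b" using dense_lc by blast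
  hence "z \<in> J" using assms(2) by simp
  thus False using assms(3) z by fastforce
qed

lemma len_ivl: assumes "a < b" shows "lc_len (ivl a b ca cb) = b - a"
proof -
  let ?J = "ivl a b ca cb"
  have ne: "?J \<noteq> {}" using dense_lc[OF assms] ivl_sandwich(1) by blast
  have "(THE l. \<exists>a' b'. a' < b' \<and> l = b' - a' \<and>
      (?J = {x. a' \<le> x \<and> x \<le> b'} \<or> ?J = {x. a' \<le> x \<and> x < b'} \<or>
       ?J = {x. a' < x \<and> x \<le> b'} \<or> ?J = {x. a' < x \<and> x < b'})) = b - a"
  proof (rule the_equality)
    have "lc_interval ?J" unfolding lc_interval_ivl using assms by blast
    thus "\<exists>a' b'. a' < b' \<and> b - a = b' - a' \<and>
      (?J = {x. a' \<le> x \<and> x \<le> b'} \<or> ?J = {x. a' \<le> x \<and> x < b'} \<or>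
       ?J = {x. a' < x \<and> x \<le> b'} \<or> ?J = {x. a' < x \<and> x < b'})"
      using assms unfolding ivl_def by (cases ca; cases cb) auto
  next
    fix l assume "\<exists>a' b'. a' < b' \<and> l = b' - a' \<and>
      (?J = {x. a' \<le> x \<and> x \<le> b'} \<or> ?J = {x. a' \<le> x \<and> x < b'} \<or>
       ?J = {x. a' < x \<and> x \<le> b'} \<or> ?J = {x. a' < x \<and> x < b'})"
    then obtain a' b' where ab': "a' < b'" "l = b' - a'" and
      d: "?J = {x. a' \<le> x \<and> x \<le> b'} \<or> ?J = {x. a' \<le> x \<and> x < b'} \<or>
       ?J = {x. a' < x \<and> x \<le> b'} \<or> ?J = {x. a' < x \<and> x < b'}" by blast
    have s1: "a' < x \<Longrightarrow> x < b' \<Longrightarrow> x \<in> ?J" for x using d by (elim disjE; simp add: le_less)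
    have s2: "x \<in> ?J \<Longrightarrow> a' \<le> x \<and> x \<le> b'" for x using d by (elim disjE; simp add: le_less)
    have "a' \<le> a" using sandwich_unique[of a b ?J a'] assms ivl_sandwich(1) s2 by blast
    moreover have "a \<le> a'" using sandwich_unique[of a' b' ?J a] ab'(1) s1 ivl_sandwich(2) by blast
    moreover have "b' \<le> b" using sandwich_unique2[of a' b' ?J b] ab'(1) s1 ivl_sandwich(3) by blast
    moreover have "b \<le> b'" using sandwich_unique2[of a b ?J b'] assms ivl_sandwich(1) s2 by blast
    ultimately show "l = b - a" using ab'(2) by simp
  qed
  thus ?thesis unfolding lc_len_def using ne by simp
qed


definition clp :: "'a::linordered_ab_group_add \<Rightarrow> 'a \<Rightarrow> 'a \<Rightarrow> 'a \<Rightarrow> 'a" where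
  "clp lo hi a b = max 0 (min hi b - max lo a)"

lemma F1_arith:
  fixes lo hi al be :: "'a::linordered_ab_group_add"
  assumes "lo \<le> hi" "al \<le> be"
  shows "hi - lo = max 0 (min hi al - lo) + clp lo hi al be + max 0 (hi - max lo be)"
  using assms unfolding clp_def
  by (cases "hi \<le> al"; cases "lo \<le> al"; cases "hi \<le> be"; cases "lo \<le> be") (auto simp: min_def max_def algebra_simps)

lemma cut_lt:
  fixes a b c :: lc
  assumes "a < b"
  shows "(c \<le> a \<and> ivl a b ca cb \<inter> {x. x < c} = {}) \<or>
         (a < c \<and> ivl a b ca cb \<inter> {x. x < c} = ivl a (min b c) ca (cb \<and> b < c))"
proof (cases "c \<le> a")
  case True
  have "ivl a b ca cb \<inter> {x. x < c} = {}"
    using True ivl_sandwich(2) by (fastforce dest: le_less_trans)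
  thus ?thesis using True by blast
next
  case False
  have "ivl a b ca cb \<inter> {x. x < c} = ivl a (min b c) ca (cb \<and> b < c)"
  proof (cases "b < c")
    case True
    thus ?thesis unfolding ivl_def by (auto simp: min_def dest: le_less_trans less_trans)
  next
    case False
    thus ?thesis unfolding ivl_def by (auto simp: min_def not_less dest: less_le_trans)
  qed
  thus ?thesis using False by simp
qed

lemma cut_gt:
  fixes a b c :: lc
  assumes "a < b"
  shows "(b \<le> c \<and> ivl a b ca cb \<inter> {x. c < x} = {}) \<or>
         (c < b \<and> ivl a b ca cb \<inter> {x. c < x} = ivl (max a c) b (ca \<and> c < a) cb)"
proof (cases "b \<le> c")
  case True
  have "ivl a b ca cb \<inter> {x. c < x} = {}"
    using True ivl_sandwich(3) by (fastforce dest: less_le_trans)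
  thus ?thesis using True by blast
next
  case False
  have "ivl a b ca cb \<inter> {x. c < x} = ivl (max a c) b (ca \<and> c < a) cb"
  proof (cases "c < a")
    case True
    thus ?thesis unfolding ivl_def by (auto simp: max_def dest: less_le_trans less_trans)
  next
    case False
    thus ?thesis unfolding ivl_def by (auto simp: max_def not_less dest: le_less_trans)
  qed
  thus ?thesis using False by simp
qed

lemma len_empty[simp]: "lc_len {} = 0" unfolding lc_len_def by simp

lemma iv0_ivl: "a < b \<Longrightarrow> iv0 (ivl a b ca cb)" unfolding iv0_def lc_interval_ivl by blast

lemma iv0_cases: "iv0 J \<Longrightarrow> J = {} \<or> (\<exists>a b ca cb. a < b \<and> J = ivl a b ca cb)"
  unfolding iv0_def lc_interval_ivl by blast

lemma iv0_lt: assumes "iv0 J" shows "iv0 (J \<inter> {x. x < c})"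
  using iv0_cases[OF assms]
proof (elim disjE exE conjE)
  fix a b ca cb assume ab: "a < b" and J: "J = ivl a b ca cb"
  from cut_lt[OF ab, of c ca cb] show ?thesis
  proof (elim disjE conjE)
    assume "ivl a b ca cb \<inter> {x. x < c} = {}" thus ?thesis using J by (simp add: iv0_def)
  next
    assume h: "a < c" "ivl a b ca cb \<inter> {x. x < c} = ivl a (min b c) ca (cb \<and> b < c)"
    have "a < min b c" using ab h(1) by simp
    thus ?thesis using iv0_ivl J h(2) by simp
  qed
qed (simp add: iv0_def)

lemma iv0_gt: assumes "iv0 J" shows "iv0 (J \<inter> {x. c < x})"
  using iv0_cases[OF assms]
proof (elim disjE exE conjE)
  fix a b ca cb assume ab: "a < b" and J: "J = ivl a b ca cb"
  from cut_gt[OF ab, of c ca cb] show ?thesis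
  proof (elim disjE conjE)
    assume "ivl a b ca cb \<inter> {x. c < x} = {}" thus ?thesis using J by (simp add: iv0_def)
  next
    assume h: "c < b" "ivl a b ca cb \<inter> {x. c < x} = ivl (max a c) b (ca \<and> c < a) cb"
    have "max a c < b" using ab h(1) by simp
    thus ?thesis using iv0_ivl J h(2) by simp
  qed
qed (simp add: iv0_def)

lemma open_cut: "J \<inter> {x. al < x \<and> x < be} = (J \<inter> {x. x < be}) \<inter> {x. al < x}" by auto

lemma iv0_open: "iv0 J \<Longrightarrow> iv0 (J \<inter> {x. al < x \<and> x < be})"
  unfolding open_cut by (intro iv0_gt iv0_lt)

lemma len_lt_ivl: assumes "a < b" shows "lc_len (ivl a b ca cb \<inter> {x. x < c}) = max 0 (min b c - a)"
  using cut_lt[OF assms, of c ca cb]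
proof (elim disjE conjE)
  assume "c \<le> a" "ivl a b ca cb \<inter> {x. x < c} = {}"
  moreover have "min b c - a \<le> 0" using \<open>c \<le> a\<close> by (simp add: min.coboundedI2)
  ultimately show ?thesis by (simp add: max_absorb1)
next
  assume h: "a < c" "ivl a b ca cb \<inter> {x. x < c} = ivl a (min b c) ca (cb \<and> b < c)"
  have "a < min b c" using h assms by simp
  hence "0 \<le> min b c - a" by (simp add: less_imp_le)
  thus ?thesis using h len_ivl \<open>a < min b c\<close> by (simp add: max_absorb2)
qed

lemma len_gt_ivl: assumes "a < b" shows "lc_len (ivl a b ca cb \<inter> {x. c < x}) = max 0 (b - max a c)"
  using cut_gt[OF assms, of c ca cb]
proof (elim disjE conjE)
  assume "b \<le> c" "ivl a b ca cb \<inter> {x. c < x} = {}"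
  moreover have "b - max a c \<le> 0" using \<open>b \<le> c\<close> by (simp add: max.coboundedI2)
  ultimately show ?thesis by (simp add: max_absorb1)
next
  assume h: "c < b" "ivl a b ca cb \<inter> {x. c < x} = ivl (max a c) b (ca \<and> c < a) cb"
  have "max a c < b" using h assms by simp
  hence "0 \<le> b - max a c" by (simp add: less_imp_le)
  thus ?thesis using h len_ivl \<open>max a c < b\<close> by (simp add: max_absorb2)
qed

lemma len_open_ivl: assumes "a < b"
  shows "lc_len (ivl a b ca cb \<inter> {x. al < x \<and> x < be}) = clp a b al be"
  using cut_lt[OF assms, of be ca cb]
proof (elim disjE conjE)
  assume "be \<le> a" "ivl a b ca cb \<inter> {x. x < be} = {}"
  moreover have "min b be - max a al \<le> 0" using \<open>be \<le> a\<close>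
  proof -
    have "min b be \<le> max a al" using \<open>be \<le> a\<close> by (meson max.coboundedI1 min.coboundedI2 order.trans)
    thus ?thesis by simp
  qed
  ultimately show ?thesis by (simp add: max_absorb1 clp_def open_cut)
next
  assume h: "a < be" "ivl a b ca cb \<inter> {x. x < be} = ivl a (min b be) ca (cb \<and> b < be)"
  have "a < min b be" using h assms by simp
  thus ?thesis unfolding open_cut h(2) clp_def by (subst len_gt_ivl) auto
qed

lemma iv0_ep:
  assumes "iv0 J"
  shows "\<exists>lo hi. lo \<le> hi \<and> (\<forall>x\<in>J. lo \<le> x \<and> x \<le> hi) \<and> lc_len J = hi - lo \<and>
     (J \<noteq> {} \<longrightarrow> lo < hi \<and> (\<forall>x. lo < x \<and> x < hi \<longrightarrow> x \<in> J)) \<and>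
     (\<forall>al be. lc_len (J \<inter> {x. al < x \<and> x < be}) = clp lo hi al be) \<and>
     (\<forall>c. lc_len (J \<inter> {x. x < c}) = max 0 (min hi c - lo)) \<and>
     (\<forall>c. lc_len (J \<inter> {x. c < x}) = max 0 (hi - max lo c))"
  using iv0_cases[OF assms]
proof (elim disjE exE conjE)
  assume "J = {}"
  thus ?thesis by (intro exI[of _ 0]) (auto simp: clp_def max_def min_def)
next
  fix a b ca cb assume ab: "a < b" and J: "J = ivl a b ca cb"
  show ?thesis
    by (intro exI[of _ a] exI[of _ b])
      (use ab in \<open>auto simp: J len_ivl len_open_ivl len_lt_ivl len_gt_ivl intro: ivl_sandwich\<close>)
qed

lemma len_nonneg: "iv0 J \<Longrightarrow> 0 \<le> lc_len J"
  using iv0_ep by fastforce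


definition EP :: "lc set \<Rightarrow> lc \<Rightarrow> lc \<Rightarrow> bool" where
  "EP J lo hi \<longleftrightarrow> lo \<le> hi \<and> (\<forall>x\<in>J. lo \<le> x \<and> x \<le> hi) \<and> lc_len J = hi - lo \<and>
     (J \<noteq> {} \<longrightarrow> lo < hi \<and> (\<forall>x. lo < x \<and> x < hi \<longrightarrow> x \<in> J)) \<and>
     (\<forall>al be. lc_len (J \<inter> {x. al < x \<and> x < be}) = clp lo hi al be) \<and>
     (\<forall>c. lc_len (J \<inter> {x. x < c}) = max 0 (min hi c - lo)) \<and>
     (\<forall>c. lc_len (J \<inter> {x. c < x}) = max 0 (hi - max lo c))"

definition epp :: "lc set \<Rightarrow> lc \<times> lc" where "epp J = (SOME p. EP J (fst p) (snd p))"
definition epl :: "lc set \<Rightarrow> lc" where "epl J = fst (epp J)"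
definition eph :: "lc set \<Rightarrow> lc" where "eph J = snd (epp J)"

lemma EP_ep: assumes "iv0 J" shows "EP J (epl J) (eph J)"
proof -
  obtain lo hi where "EP J lo hi" using iv0_ep[OF assms] unfolding EP_def by blast
  hence "\<exists>p. EP J (fst p) (snd p)" by (intro exI[of _ "(lo, hi)"]) simp
  thus ?thesis unfolding epl_def eph_def epp_def by (rule someI_ex)
qed

lemma ep_le: "iv0 J \<Longrightarrow> epl J \<le> eph J" using EP_ep unfolding EP_def by blast
lemma ep_mem: "iv0 J \<Longrightarrow> x \<in> J \<Longrightarrow> epl J \<le> x \<and> x \<le> eph J" using EP_ep unfolding EP_def by blast
lemma ep_len: "iv0 J \<Longrightarrow> lc_len J = eph J - epl J" using EP_ep unfolding EP_def by blast
lemma ep_ne: "iv0 J \<Longrightarrow> J \<noteq> {} \<Longrightarrow> epl J < eph J" using EP_ep unfolding EP_def by blast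
lemma ep_open: "iv0 J \<Longrightarrow> J \<noteq> {} \<Longrightarrow> epl J < x \<Longrightarrow> x < eph J \<Longrightarrow> x \<in> J" using EP_ep unfolding EP_def by blast
lemma ep_clp: "iv0 J \<Longrightarrow> lc_len (J \<inter> {x. al < x \<and> x < be}) = clp (epl J) (eph J) al be" using EP_ep unfolding EP_def by blast
lemma ep_ltc: "iv0 J \<Longrightarrow> lc_len (J \<inter> {x. x < c}) = max 0 (min (eph J) c - epl J)" using EP_ep unfolding EP_def by blast
lemma ep_gtc: "iv0 J \<Longrightarrow> lc_len (J \<inter> {x. c < x}) = max 0 (eph J - max (epl J) c)" using EP_ep unfolding EP_def by blast

lemma dsl_ep:
  fixes a b :: "'i \<Rightarrow> lc"
  assumes "finite S" "\<forall>i\<in>S. A \<le> a i \<and> a i < b i \<and> b i \<le> B"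
    "\<forall>i\<in>S. \<forall>j\<in>S. i \<noteq> j \<longrightarrow> (\<forall>x. \<not> (a i < x \<and> x < b i \<and> a j < x \<and> x < b j))" "A \<le> B"
  shows "(\<Sum>i\<in>S. b i - a i) \<le> B - A"
  using assms
proof (induction "card S" arbitrary: S B rule: less_induct)
  case less
  show ?case
  proof (cases "S = {}")
    case True thus ?thesis using less.prems(4) by simp
  next
    case False
    have "Max (a ` S) \<in> a ` S" using less.prems(1) False by (intro Max_in) auto
    then obtain k where k: "k \<in> S" "a k = Max (a ` S)" by (metis imageE)
    have kmax: "a i \<le> a k" if "i \<in> S" for i using k less.prems(1) that by simp
    let ?S' = "S - {k}"
    have bi: "b i \<le> a k" if "i \<in> ?S'" for i
    proof (rule ccontr)
      assume "\<not> b i \<le> a k"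
      hence "a k < min (b i) (b k)" using less.prems(2) k(1) by (simp add: not_le)
      then obtain z where z: "a k < z" "z < min (b i) (b k)" using dense_lc by blast
      have "a i < z" using kmax[of i] that z(1) by (meson DiffD1 le_less_trans)
      moreover have "z < b i" "z < b k" using z(2) by auto
      moreover have "i \<in> S" "i \<noteq> k" using that by auto
      ultimately show False using less.prems(3) k(1) z(1) by blast
    qed
    have ih: "(\<Sum>i\<in>?S'. b i - a i) \<le> a k - A"
    proof (rule less.hyps)
      show "card ?S' < card S" by (rule card_Diff1_less[OF less.prems(1) k(1)])
      show "finite ?S'" using less.prems(1) by simp
      show "\<forall>i\<in>?S'. A \<le> a i \<and> a i < b i \<and> b i \<le> a k" using less.prems(2) bi by blast
      show "\<forall>i\<in>?S'. \<forall>j\<in>?S'. i \<noteq> j \<longrightarrow> (\<forall>x. \<not> (a i < x \<and> x < b i \<and> a j < x \<and> x < b j))"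
        using less.prems(3) by blast
      show "A \<le> a k" using less.prems(2) k(1) by blast
    qed
    have "(\<Sum>i\<in>S. b i - a i) = (b k - a k) + (\<Sum>i\<in>?S'. b i - a i)"
      using k(1) less.prems(1) by (simp add: sum.remove)
    also have "\<dots> \<le> (b k - a k) + (a k - A)" using ih by (rule add_left_mono)
    also have "\<dots> = b k - A" by simp
    also have "\<dots> \<le> B - A" using less.prems(2) k(1) by simp
    finally show ?thesis .
  qed
qed

lemma dsl_set:
  fixes P :: "'i \<Rightarrow> lc set"
  assumes "finite S" "\<forall>i\<in>S. iv0 (P i) \<and> P i \<subseteq> J" "\<forall>i\<in>S. \<forall>j\<in>S. i \<noteq> j \<longrightarrow> P i \<inter> P j = {}" "iv0 J"
  shows "(\<Sum>i\<in>S. lc_len (P i)) \<le> lc_len J"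
proof -
  let ?S = "{i\<in>S. P i \<noteq> {}}"
  have "(\<Sum>i\<in>S. lc_len (P i)) = (\<Sum>i\<in>?S. lc_len (P i))"
    using assms(1) by (intro sum.mono_neutral_right) auto
  also have "\<dots> = (\<Sum>i\<in>?S. eph (P i) - epl (P i))"
    using assms(2) ep_len by (intro sum.cong) auto
  also have "\<dots> \<le> eph J - epl J"
  proof (rule dsl_ep)
    show "finite ?S" using assms(1) by simp
    show "epl J \<le> eph J" using ep_le[OF assms(4)] .
    show "\<forall>i\<in>?S. epl J \<le> epl (P i) \<and> epl (P i) < eph (P i) \<and> eph (P i) \<le> eph J"
    proof
      fix i assume i: "i \<in> ?S"
      hence iv: "iv0 (P i)" "P i \<subseteq> J" "P i \<noteq> {}" using assms(2) by auto
      have lt: "epl (P i) < eph (P i)" using ep_ne iv by blast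
      have op: "\<And>x. epl (P i) < x \<Longrightarrow> x < eph (P i) \<Longrightarrow> x \<in> P i" using ep_open iv by blast
      have m: "\<And>x. x \<in> P i \<Longrightarrow> epl J \<le> x \<and> x \<le> eph J" using ep_mem[OF assms(4)] iv(2) by blast
      have "epl J \<le> epl (P i)" using sandwich_unique[OF lt op] m by blast
      moreover have "eph (P i) \<le> eph J" using sandwich_unique2[OF lt op] m by blast
      ultimately show "epl J \<le> epl (P i) \<and> epl (P i) < eph (P i) \<and> eph (P i) \<le> eph J" using lt by blast
    qed
    show "\<forall>i\<in>?S. \<forall>j\<in>?S. i \<noteq> j \<longrightarrow> (\<forall>x. \<not> (epl (P i) < x \<and> x < eph (P i) \<and> epl (P j) < x \<and> x < eph (P j)))"
    proof (intro ballI impI allI notI)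
      fix i j x assume h: "i \<in> ?S" "j \<in> ?S" "i \<noteq> j" "epl (P i) < x \<and> x < eph (P i) \<and> epl (P j) < x \<and> x < eph (P j)"
      have "x \<in> P i" using h(1,4) assms(2) ep_open by blast
      moreover have "x \<in> P j" using h(2,4) assms(2) ep_open by blast
      ultimately show False using assms(3) h(1-3) by blast
    qed
  qed
  also have "\<dots> = lc_len J" using ep_len[OF assms(4)] by simp
  finally show ?thesis .
qed


lemma clp_split:
  fixes lo hi a L b :: "'a::linordered_ab_group_add"
  assumes "lo \<le> hi" "a \<le> L" "L \<le> b"
  shows "clp lo hi a L + clp lo hi L b = clp lo hi a b"
  using assms unfolding clp_def
  by (cases "hi \<le> L"; cases "lo \<le> L"; cases "hi \<le> b"; cases "lo \<le> a"; cases "hi \<le> a"; cases "lo \<le> b")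
    (auto simp: min_def max_def algebra_simps)

lemma clp_mono_left:
  fixes lo hi L R b :: "'a::linordered_ab_group_add"
  assumes "L \<le> R"
  shows "clp lo hi R b \<le> clp lo hi L b"
  using assms unfolding clp_def
  by (cases "lo \<le> L"; cases "lo \<le> R") (auto simp: min_def max_def algebra_simps intro: max.coboundedI2)

lemma clp_nonneg: "0 \<le> clp lo hi a b" unfolding clp_def by simp

lemma clp_le_len:
  fixes lo hi a b :: "'a::linordered_ab_group_add"
  assumes "lo \<le> hi" shows "clp lo hi a b \<le> hi - lo"
proof (cases "hi \<le> b \<or> \<not> lo \<le> a")
  case False
  hence "b + lo \<le> hi + a" by (intro add_mono) auto
  thus ?thesis using False assms by (auto simp: clp_def min_def max_def algebra_simps)
next
  case True
  thus ?thesis using assms by (cases "hi \<le> b"; cases "lo \<le> a") (auto simp: clp_def min_def max_def algebra_simps)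
qed

lemma gap_arith:
  fixes lo hi a b :: "'a::linordered_ab_group_add"
  assumes "lo \<le> hi" "a \<le> b"
  shows "a \<le> max a (min b lo)" "max a (min b lo) \<le> min b (max a hi)" "min b (max a hi) \<le> b"
    "(max a (min b lo) - a) + (b - min b (max a hi)) + clp lo hi a b = b - a"
  using assms unfolding clp_def
  by (cases "hi \<le> b"; cases "lo \<le> a"; cases "lo \<le> b"; cases "hi \<le> a"; auto simp: min_def max_def algebra_simps)+

lemma two_halves:
  fixes P Q M :: "'a::linordered_ab_group_add"
  assumes "M + M \<le> P + Q" shows "M \<le> P \<or> M \<le> Q"
proof (rule ccontr)
  assume "\<not> (M \<le> P \<or> M \<le> Q)"
  hence "P + Q < M + M" by (simp add: not_le add_strict_mono)
  thus False using assms by simp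
qed

lemma gap:
  fixes lo hi :: "'i \<Rightarrow> lc"
  assumes "finite F" "\<forall>i\<in>F. lo i \<le> hi i" "a \<le> b" "0 < c"
    "mon (2 ^ card F * c) e + (\<Sum>i\<in>F. clp (lo i) (hi i) a b) \<le> b - a"
  shows "\<exists>u. a \<le> u \<and> u + mon c e \<le> b \<and>
     (\<forall>i\<in>F. \<forall>x. u < x \<and> x < u + mon c e \<longrightarrow> \<not> (lo i \<le> x \<and> x \<le> hi i))"
  using assms
proof (induction F arbitrary: a b rule: finite_induct)
  case empty
  thus ?case by (intro exI[of _ a]) (simp add: le_diff_eq add.commute)
next
  case (insert i F)
  define L where "L = max a (min b (lo i))"
  define R where "R = min b (max a (hi i))"
  let ?M = "mon (2 ^ card F * c) e"
  have loi: "lo i \<le> hi i" using insert.prems(1) by simp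
  have aL: "a \<le> L" and LR: "L \<le> R" and Rb: "R \<le> b"
    and eqn: "(L - a) + (b - R) + clp (lo i) (hi i) a b = b - a"
    using gap_arith[OF loi insert.prems(2)] unfolding L_def R_def by auto
  have MM: "mon (2 ^ card (insert i F) * c) e = ?M + ?M"
    using insert.hyps by (simp add: mono_add algebra_simps)
  let ?SL = "\<Sum>j\<in>F. clp (lo j) (hi j) a L"
  let ?SR = "\<Sum>j\<in>F. clp (lo j) (hi j) R b"
  let ?S = "\<Sum>j\<in>F. clp (lo j) (hi j) a b"
  have "?SL + ?SR \<le> ?S"
  proof -
    have "?SL + ?SR = (\<Sum>j\<in>F. clp (lo j) (hi j) a L + clp (lo j) (hi j) R b)" by (simp add: sum.distrib)
    also have "\<dots> \<le> ?S"
    proof (rule sum_mono)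
      fix j assume "j \<in> F"
      hence lj: "lo j \<le> hi j" using insert.prems(1) by simp
      have "clp (lo j) (hi j) R b \<le> clp (lo j) (hi j) L b" using clp_mono_left[OF LR] .
      hence "clp (lo j) (hi j) a L + clp (lo j) (hi j) R b \<le> clp (lo j) (hi j) a L + clp (lo j) (hi j) L b"
        by (rule add_left_mono)
      also have "\<dots> = clp (lo j) (hi j) a b" using clp_split[OF lj aL] LR Rb by (meson order.trans)
      finally show "clp (lo j) (hi j) a L + clp (lo j) (hi j) R b \<le> clp (lo j) (hi j) a b" .
    qed
    finally show ?thesis .
  qed
  have hyp: "?M + ?M + (clp (lo i) (hi i) a b + ?S) \<le> b - a"
    using insert.prems(4) insert.hyps MM by simp
  have "?M + ?M \<le> ((L - a) - ?SL) + ((b - R) - ?SR)"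
  proof -
    have "?M + ?M \<le> (b - a) - (clp (lo i) (hi i) a b + ?S)" using hyp by (simp add: le_diff_eq)
    also have "\<dots> = ((L - a) + (b - R)) - ?S" using eqn by (simp add: algebra_simps)
    also have "\<dots> \<le> ((L - a) + (b - R)) - (?SL + ?SR)" using \<open>?SL + ?SR \<le> ?S\<close> by (rule diff_left_mono)
    also have "\<dots> = ((L - a) - ?SL) + ((b - R) - ?SR)" by (simp add: algebra_simps)
    finally show ?thesis .
  qed
  hence "?M \<le> (L - a) - ?SL \<or> ?M \<le> (b - R) - ?SR" by (rule two_halves)
  thus ?case
  proof
    assume h: "?M \<le> (L - a) - ?SL"
    have "\<exists>u. a \<le> u \<and> u + mon c e \<le> L \<and>
     (\<forall>j\<in>F. \<forall>x. u < x \<and> x < u + mon c e \<longrightarrow> \<not> (lo j \<le> x \<and> x \<le> hi j))"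
      using insert.prems(1,3) aL h by (intro insert.IH) (auto simp: le_diff_eq)
    then obtain u where u: "a \<le> u" "u + mon c e \<le> L"
      "\<forall>j\<in>F. \<forall>x. u < x \<and> x < u + mon c e \<longrightarrow> \<not> (lo j \<le> x \<and> x \<le> hi j)" by blast
    have "\<not> (lo i \<le> x \<and> x \<le> hi i)" if "u < x" "x < u + mon c e" for x
    proof -
      have xL: "x < L" using that u(2) by simp
      have "a < x" using u(1) that(1) by simp
      hence "x < min b (lo i)" using xL unfolding L_def by (metis less_max_iff_disj less_asym)
      thus ?thesis by (simp add: not_le)
    qed
    thus ?thesis using u LR Rb by (intro exI[of _ u]) auto
  next
    assume h: "?M \<le> (b - R) - ?SR"
    have "\<exists>u. R \<le> u \<and> u + mon c e \<le> b \<and>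
     (\<forall>j\<in>F. \<forall>x. u < x \<and> x < u + mon c e \<longrightarrow> \<not> (lo j \<le> x \<and> x \<le> hi j))"
      using insert.prems(1,3) Rb h by (intro insert.IH) (auto simp: le_diff_eq)
    then obtain u where u: "R \<le> u" "u + mon c e \<le> b"
      "\<forall>j\<in>F. \<forall>x. u < x \<and> x < u + mon c e \<longrightarrow> \<not> (lo j \<le> x \<and> x \<le> hi j)" by blast
    have "\<not> (lo i \<le> x \<and> x \<le> hi i)" if "u < x" "x < u + mon c e" for x
    proof -
      have xb: "x < b" using that u(2) by simp
      have "R < x" using u(1) that(1) by simp
      hence "max a (hi i) < x" using xb unfolding R_def by (metis min_less_iff_disj less_asym)
      thus ?thesis by (simp add: not_le)
    qed
    thus ?thesis using u aL LR by (intro exI[of _ u]) auto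
  qed
qed


lemma len_open_le: "iv0 J \<Longrightarrow> lc_len (J \<inter> {x. al < x \<and> x < be}) \<le> lc_len J"
  using ep_clp[of J al be] ep_len[of J] clp_le_len[OF ep_le[of J]] by simp

lemma len_open_nonneg: "iv0 J \<Longrightarrow> 0 \<le> lc_len (J \<inter> {x. al < x \<and> x < be})"
  using ep_clp[of J al be] clp_nonneg by simp

lemma core:
  assumes ab: "al < be" and cov: "\<And>x. al < x \<Longrightarrow> x < be \<Longrightarrow> \<exists>m. x \<in> J m"
    and iv: "\<And>m. iv0 (J m)" and sJ: "lc_sums (\<lambda>m. lc_len (J m)) sJ"
  shows "\<exists>s. lc_sums (\<lambda>m. lc_len (J m \<inter> {x. al < x \<and> x < be})) s \<and> be - al \<le> s"
proof -
  let ?c = "\<lambda>m. lc_len (J m \<inter> {x. al < x \<and> x < be})"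
  obtain s where s: "lc_sums ?c s"
    using sums_dominated[OF _ sJ, of ?c] len_open_le[OF iv] len_open_nonneg[OF iv] by blast
  have "be - al \<le> s"
  proof (rule ccontr)
    assume "\<not> be - al \<le> s"
    hence d: "0 < be - al - s" by (simp add: not_le)
    define \<delta> where "\<delta> = be - al - s"
    obtain e where e: "coeff \<delta> e > 0" "vb e \<delta>" using exists_lead d unfolding \<delta>_def by blast
    define p where "p = coeff \<delta> e"
    obtain N where N: "\<forall>m\<ge>N. lc_abs (lc_len (J m)) < mon 1 (e + 1)"
      using sums_term_small[OF sJ mono_pos[of 1 "e+1"]] by auto
    have small: "lc_len (J m) < mon 1 (e + 1)" if "m \<ge> N" for m
      using N that unfolding lc_abs_less_iff by blast
    define c where "c = p / 2 ^ (N + 1)"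
    have c0: "0 < c" using e(1) unfolding c_def p_def by simp
    have eqc: "2 ^ card {..<N} * c = p / 2" unfolding c_def by (simp add: field_simps)
    have "mon (p / 2) e < \<delta>"
      using mono_less_lead[of "p/2" \<delta> e] e unfolding p_def by simp
    hence mc: "mon (2 ^ card {..<N} * c) e < \<delta>" by (simp only: eqc)
    have psum: "(\<Sum>m\<in>{..<N}. ?c m) \<le> s"
      using sums_ge_psum[OF len_open_nonneg[OF iv] s, of N] by (simp add: psum_eq)
    have clpeq: "?c m = clp (epl (J m)) (eph (J m)) al be" for m using ep_clp[OF iv] .
    have "mon (2 ^ card {..<N} * c) e + (\<Sum>m\<in>{..<N}. clp (epl (J m)) (eph (J m)) al be) \<le> be - al"
    proof -
      have "mon (2 ^ card {..<N} * c) e + (\<Sum>m\<in>{..<N}. ?c m) \<le> \<delta> + s"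
        using mc psum by (intro add_mono) auto
      thus ?thesis unfolding clpeq \<delta>_def by simp
    qed
    then obtain u where u: "al \<le> u" "u + mon c e \<le> be"
      "\<forall>m\<in>{..<N}. \<forall>x. u < x \<and> x < u + mon c e \<longrightarrow> \<not> (epl (J m) \<le> x \<and> x \<le> eph (J m))"
      using gap[of "{..<N}" "\<lambda>m. epl (J m)" "\<lambda>m. eph (J m)" al be c e] ep_le[OF iv] less_imp_le[OF ab] c0 by auto
    define x where "x r = u + mon r e" for r
    have xin: "u < x r \<and> x r < u + mon c e" if "r \<in> {0<..<c}" for r
    proof -
      have "0 < mon r e" using that mono_pos by simp
      moreover have "mon r e < mon c e" using that mono_less by simp
      ultimately show ?thesis unfolding x_def by simp
    qed
    have xcov: "\<exists>m. x r \<in> J m" if "r \<in> {0<..<c}" for r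
      using cov xin[OF that] u(1,2) by (meson le_less_trans less_le_trans)
    define f where "f r = (SOME m. x r \<in> J m)" for r
    have fJ: "x r \<in> J (f r)" if "r \<in> {0<..<c}" for r
      unfolding f_def using xcov[OF that] by (rule someI_ex)
    have fN: "f r \<ge> N" if "r \<in> {0<..<c}" for r
    proof (rule ccontr)
      assume "\<not> f r \<ge> N"
      hence "f r \<in> {..<N}" by simp
      thus False using u(3) xin[OF that] fJ[OF that] ep_mem[OF iv] by blast
    qed
    have noinj: False if "r \<in> {0<..<c}" "r' \<in> {0<..<c}" "r < r'" "f r = f r'" for r r'
    proof -
      let ?m = "f r"
      have m1: "epl (J ?m) \<le> x r" using ep_mem[OF iv fJ[OF that(1)]] by simp
      have m2: "x r' \<le> eph (J ?m)" using ep_mem[OF iv fJ[OF that(2)]] that(4) by simp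
      have "x r' - x r \<le> eph (J ?m) - epl (J ?m)" by (rule diff_mono[OF m2 m1])
      also have "\<dots> = lc_len (J ?m)" using ep_len[OF iv] by simp
      also have "\<dots> < mon 1 (e + 1)" using small fN[OF that(1)] by simp
      also have "\<dots> < mon (r' - r) e" using that(3) by (intro mono_less_exp) auto
      finally have "x r' - x r < mon (r' - r) e" .
      moreover have "x r' - x r = mon (r' - r) e" unfolding x_def by (simp add: mono_diff[symmetric])
      ultimately show False by simp
    qed
    have "inj_on f {0<..<c}"
    proof (rule inj_onI)
      fix r r' assume h: "r \<in> {0<..<c}" "r' \<in> {0<..<c}" "f r = f r'"
      show "r = r'"
      proof (rule ccontr)
        assume "r \<noteq> r'"
        hence "r < r' \<or> r' < r" by auto
        thus False using noinj h by metis
      qed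
    qed
    hence "countable {0<..<c}" by (rule countableI)
    thus False using uncountable_open_interval[of 0 c] c0 by simp
  qed
  thus ?thesis using s by blast
qed


lemma monotone_sums:
  assumes ivI: "\<And>n. iv0 (I n)" and dI: "\<And>m n. m \<noteq> n \<Longrightarrow> I m \<inter> I n = {}"
    and sI: "lc_sums (\<lambda>n. lc_len (I n)) sI"
    and ivJ: "\<And>m. iv0 (J m)" and sJ: "lc_sums (\<lambda>m. lc_len (J m)) sJ"
    and sub: "(\<Union>n. I n) \<subseteq> (\<Union>m. J m)"
  shows "sI \<le> sJ"
proof -
  define Op where "Op n = {x. epl (I n) < x \<and> x < eph (I n)}" for n
  define g where "g n m = (if I n = {} then 0 else lc_len (J m \<inter> Op n))" for n m
  have OI: "Op n \<subseteq> I n" if "I n \<noteq> {}" for n using ep_open[OF ivI that] unfolding Op_def by blast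
  have ex: "\<exists>s. lc_sums (g n) s \<and> lc_len (I n) \<le> s" for n
  proof (cases "I n = {}")
    case True thus ?thesis unfolding g_def using sums_zero by auto
  next
    case False
    have "\<exists>s. lc_sums (\<lambda>m. lc_len (J m \<inter> {x. epl (I n) < x \<and> x < eph (I n)})) s \<and> eph (I n) - epl (I n) \<le> s"
    proof (rule core)
      show "epl (I n) < eph (I n)" using ep_ne[OF ivI False] .
      fix x assume "epl (I n) < x" "x < eph (I n)"
      hence "x \<in> I n" using ep_open[OF ivI False] by blast
      thus "\<exists>m. x \<in> J m" using sub by blast
    qed (use ivJ sJ in auto)
    thus ?thesis using False ep_len[OF ivI] unfolding g_def Op_def by simp
  qed
  then obtain sf where sf: "\<And>n. lc_sums (g n) (sf n) \<and> lc_len (I n) \<le> sf n" by metis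
  have bound: "lc_psum (\<lambda>n. lc_len (I n)) N \<le> sJ" for N
  proof -
    have h1: "lc_sums (\<lambda>m. \<Sum>n<N. g n m) (\<Sum>n<N. sf n)" using sf by (intro sums_finite_sum) auto
    have h2: "(\<Sum>n<N. g n m) \<le> lc_len (J m)" for m
    proof -
      let ?S = "{n\<in>{..<N}. I n \<noteq> {}}"
      have "(\<Sum>n<N. g n m) = (\<Sum>n\<in>?S. lc_len (J m \<inter> Op n))"
        unfolding sum.inter_filter[OF finite_lessThan] g_def by (intro sum.cong) auto
      also have "\<dots> \<le> lc_len (J m)"
      proof (rule dsl_set)
        show "finite ?S" by simp
        show "iv0 (J m)" using ivJ .
        show "\<forall>i\<in>?S. iv0 (J m \<inter> Op i) \<and> J m \<inter> Op i \<subseteq> J m" unfolding Op_def using iv0_open[OF ivJ] by blast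
        show "\<forall>i\<in>?S. \<forall>j\<in>?S. i \<noteq> j \<longrightarrow> (J m \<inter> Op i) \<inter> (J m \<inter> Op j) = {}"
        proof (intro ballI impI)
          fix i j assume "i \<in> ?S" "j \<in> ?S" "i \<noteq> j"
          thus "(J m \<inter> Op i) \<inter> (J m \<inter> Op j) = {}" using OI dI[of i j] by blast
        qed
      qed
      finally show ?thesis .
    qed
    have "(\<Sum>n<N. sf n) \<le> sJ" by (rule sums_le[OF h2 h1 sJ])
    moreover have "lc_psum (\<lambda>n. lc_len (I n)) N \<le> (\<Sum>n<N. sf n)"
      unfolding psum_eq using sf by (intro sum_mono) auto
    ultimately show ?thesis by simp
  qed
  show ?thesis
    by (rule lc_tendsto_le[OF sI[unfolded lc_sums_def] lc_tendsto_const[of sJ], of 0]) (simp add: bound)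
qed


lemma family_iv0: "lc_ivl_family I \<Longrightarrow> iv0 (I n)" unfolding lc_ivl_family_def iv0_def by blast

lemma inner_le_outer:
  assumes "x \<in> inner_sums A" "y \<in> outer_sums A" shows "x \<le> y"
proof -
  obtain I where I: "lc_ivl_family I" "(\<Union>n. I n) \<subseteq> A" "lc_sums (\<lambda>n. lc_len (I n)) x"
    using assms(1) unfolding inner_sums_def by blast
  obtain J where J: "lc_ivl_family J" "A \<subseteq> (\<Union>n. J n)" "lc_sums (\<lambda>n. lc_len (J n)) y"
    using assms(2) unfolding outer_sums_def by blast
  show ?thesis
  proof (rule monotone_sums[OF family_iv0[OF I(1)] _ I(3) family_iv0[OF J(1)] J(3)])
    show "\<And>m n. m \<noteq> n \<Longrightarrow> I m \<inter> I n = {}" using I(1) unfolding lc_ivl_family_def by blast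
    show "(\<Union>n. I n) \<subseteq> (\<Union>n. J n)" using I(2) J(2) by blast
  qed
qed

lemma S_measure_eq:
  assumes "lc_is_sup (inner_sums A) m" "lc_is_inf (outer_sums A) m"
  shows "S_measure A = m"
  unfolding S_measure_def
proof (rule the_equality)
  show "lc_is_sup (inner_sums A) m \<and> lc_is_inf (outer_sums A) m" using assms by blast
next
  fix m' assume "lc_is_sup (inner_sums A) m' \<and> lc_is_inf (outer_sums A) m'"
  hence "m' \<le> m" "m \<le> m'" using assms(1) unfolding lc_is_sup_def by blast+
  thus "m' = m" by simp
qed

lemma mon_small: "0 < \<epsilon> \<Longrightarrow> \<exists>k::nat. \<forall>j\<ge>k. mon 1 (of_nat j) < \<epsilon>"
proof -
  assume "0 < \<epsilon>"
  then obtain e where e: "coeff \<epsilon> e > 0" "vb e \<epsilon>" using exists_lead by blast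
  show ?thesis
  proof (intro exI[of _ "nat \<lceil>e\<rceil> + 1"] allI impI)
    fix j assume "nat \<lceil>e\<rceil> + 1 \<le> j"
    hence "e < of_nat j" using nat_ceil_gt[of e] by (meson less_le_trans of_nat_le_iff)
    thus "mon 1 (of_nat j) < \<epsilon>" using vb_less[OF e, of "of_nat j"] vb_mono by blast
  qed
qed

lemma mon_antimono: "k \<le> j \<Longrightarrow> mon 1 (of_nat j) \<le> mon 1 (of_nat k)"
proof (cases "k = j")
  case False
  assume "k \<le> j" hence "(of_nat k :: rat) < of_nat j" using False by simp
  hence "mon 1 (of_nat j) < mon 1 (of_nat k)" by (intro mono_less_exp) auto
  thus ?thesis by simp
qed simp

lemma S_measure_props:
  assumes "S_measurable A"
  shows "lc_is_sup (inner_sums A) (S_measure A)" "lc_is_inf (outer_sums A) (S_measure A)"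
proof -
  have "\<forall>k::nat. \<exists>x y. x \<in> inner_sums A \<and> y \<in> outer_sums A \<and> y - x \<le> mon 1 (of_nat k)"
  proof
    fix k :: nat
    have "0 < mon 1 (of_nat k)" by (rule mono_pos) simp
    thus "\<exists>x y. x \<in> inner_sums A \<and> y \<in> outer_sums A \<and> y - x \<le> mon 1 (of_nat k)"
      using assms unfolding S_measurable_def by blast
  qed
  then obtain sI sJ where sIJ: "\<And>k. sI k \<in> inner_sums A" "\<And>k. sJ k \<in> outer_sums A"
    "\<And>k. sJ k - sI k \<le> mon 1 (of_nat k)" by metis
  have cau: "lc_cauchy sI" unfolding lc_cauchy_def
  proof (intro allI impI)
    fix \<epsilon> :: lc assume "0 < \<epsilon>"
    then obtain k where k: "\<forall>j\<ge>k. mon 1 (of_nat j) < \<epsilon>" using mon_small by blast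
    have d: "sI i - sI j < \<epsilon>" if "k \<le> i" "k \<le> j" for i j
    proof -
      have "sI i \<le> sJ j" using inner_le_outer sIJ by blast
      hence "sI i - sI j \<le> sJ j - sI j" by (rule diff_right_mono)
      also have "\<dots> \<le> mon 1 (of_nat j)" using sIJ(3) .
      also have "\<dots> < \<epsilon>" using k that by blast
      finally show ?thesis .
    qed
    show "\<exists>N. \<forall>i\<ge>N. \<forall>j\<ge>N. lc_abs (sI i - sI j) < \<epsilon>"
      using d unfolding lc_abs_less_iff by (metis minus_diff_eq)
  qed
  then obtain m where m: "lc_tendsto sI m" using cauchy_conv by blast
  have KL: "z \<le> m" if z: "\<And>k. z \<le> sJ k" for z
  proof (rule ccontr)
    assume "\<not> z \<le> m" hence d: "0 < z - m" by (simp add: not_le)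
    let ?h = "half (z - m)"
    obtain k0 where k0: "\<forall>j\<ge>k0. mon 1 (of_nat j) < ?h" using mon_small half_pos[OF d] by blast
    obtain N where N: "\<forall>n\<ge>N. lc_abs (sI n - m) < ?h" using m half_pos[OF d] unfolding lc_tendsto_def by blast
    let ?k = "max k0 N"
    have "z \<le> sJ ?k" using z .
    also have "\<dots> \<le> sI ?k + mon 1 (of_nat ?k)" using sIJ(3)[of ?k] by (simp add: diff_le_eq add.commute)
    also have "\<dots> < (m + ?h) + ?h"
    proof (rule add_strict_mono)
      show "sI ?k < m + ?h" using N unfolding lc_abs_less_iff by (simp add: diff_less_eq add.commute)
      show "mon 1 (of_nat ?k) < ?h" using k0 by simp
    qed
    also have "\<dots> = z" by (simp add: add.assoc)
    finally show False by simp
  qed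
  have KL2: "m \<le> z" if z: "\<And>k. sI k \<le> z" for z
    by (rule lc_tendsto_le[OF m lc_tendsto_const, of 0]) (simp add: z)
  show "lc_is_sup (inner_sums A) (S_measure A)" "lc_is_inf (outer_sums A) (S_measure A)"
  proof -
    have sup: "lc_is_sup (inner_sums A) m" unfolding lc_is_sup_def
      using KL KL2 inner_le_outer sIJ by blast
    have inf: "lc_is_inf (outer_sums A) m" unfolding lc_is_inf_def
      using KL KL2 inner_le_outer sIJ by blast
    have "S_measure A = m" using S_measure_eq[OF sup inf] .
    thus "lc_is_sup (inner_sums A) (S_measure A)" "lc_is_inf (outer_sums A) (S_measure A)" using sup inf by simp_all
  qed
qed

lemma S_measure_approx:
  assumes "S_measurable A" "0 < \<epsilon>"
  shows "\<exists>x\<in>inner_sums A. S_measure A - \<epsilon> \<le> x" "\<exists>y\<in>outer_sums A. y \<le> S_measure A + \<epsilon>"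
proof -
  obtain x y where xy: "x \<in> inner_sums A" "y \<in> outer_sums A" "y - x \<le> \<epsilon>"
    using assms unfolding S_measurable_def by blast
  have "S_measure A \<le> y" "x \<le> S_measure A"
    using S_measure_props[OF assms(1)] xy unfolding lc_is_sup_def lc_is_inf_def by blast+
  show "\<exists>x\<in>inner_sums A. S_measure A - \<epsilon> \<le> x"
  proof (intro bexI[OF _ xy(1)])
    have "S_measure A - \<epsilon> \<le> y - \<epsilon>" using \<open>S_measure A \<le> y\<close> by (rule diff_right_mono)
    also have "\<dots> \<le> x" using xy(3) by (simp add: diff_le_eq add.commute)
    finally show "S_measure A - \<epsilon> \<le> x" .
  qed
  show "\<exists>y\<in>outer_sums A. y \<le> S_measure A + \<epsilon>"
  proof (intro bexI[OF _ xy(2)])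
    have "y \<le> x + \<epsilon>" using xy(3) by (simp add: diff_le_eq add.commute)
    also have "\<dots> \<le> S_measure A + \<epsilon>" using \<open>x \<le> S_measure A\<close> by (rule add_right_mono)
    finally show "y \<le> S_measure A + \<epsilon>" .
  qed
qed


definition splitf :: "(nat \<Rightarrow> lc set) \<Rightarrow> lc \<Rightarrow> lc \<Rightarrow> nat \<Rightarrow> lc set" where
  "splitf F c d n = (if even n then F (n div 2) \<inter> {x. x < c} else F (n div 2) \<inter> {x. d < x})"

lemma len_decomp:
  assumes "iv0 J" "c \<le> d"
  shows "lc_len (J \<inter> {x. x < c}) + lc_len (J \<inter> {x. d < x}) = lc_len J - lc_len (J \<inter> {x. c < x \<and> x < d})"
proof -
  have h: "eph J - epl J = max 0 (min (eph J) c - epl J) + clp (epl J) (eph J) c d + max 0 (eph J - max (epl J) d)"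
    by (rule F1_arith[OF ep_le[OF assms(1)] assms(2)])
  show ?thesis unfolding ep_ltc[OF assms(1)] ep_gtc[OF assms(1)] ep_clp[OF assms(1)] ep_len[OF assms(1)] h
    by (simp add: algebra_simps)
qed

lemma split_family:
  assumes F: "lc_ivl_family F" and cd: "c \<le> d" and s: "lc_sums (\<lambda>n. lc_len (F n)) s"
    and t: "lc_sums (\<lambda>n. lc_len (F n \<inter> {x. c < x \<and> x < d})) t"
  shows "lc_ivl_family (splitf F c d)" "lc_sums (\<lambda>n. lc_len (splitf F c d n)) (s - t)"
    "x \<in> (\<Union>n. splitf F c d n) \<longleftrightarrow> x \<in> (\<Union>n. F n) \<and> (x < c \<or> d < x)"
proof -
  have iv: "iv0 (F n)" for n using family_iv0[OF F] .
  have dF: "F m \<inter> F n = {}" if "m \<noteq> n" for m n using F that unfolding lc_ivl_family_def by blast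
  have sub: "splitf F c d n \<subseteq> F (n div 2)" for n unfolding splitf_def by auto
  have ivs: "iv0 (splitf F c d n)" for n unfolding splitf_def using iv0_lt[OF iv] iv0_gt[OF iv] by simp
  show "lc_ivl_family (splitf F c d)" unfolding lc_ivl_family_def
  proof (intro conjI allI impI)
    fix n show "splitf F c d n = {} \<or> lc_interval (splitf F c d n)" using ivs[of n] unfolding iv0_def .
  next
    fix m n :: nat assume mn: "m \<noteq> n"
    show "splitf F c d m \<inter> splitf F c d n = {}"
    proof (cases "m div 2 = n div 2")
      case False thus ?thesis using sub[of m] sub[of n] dF[OF False] by blast
    next
      case True
      hence "even m \<noteq> even n" using mn by (metis dvd_mult_div_cancel odd_two_times_div_two_succ)
      thus ?thesis unfolding splitf_def using cd by (auto dest: less_le_trans less_trans)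
    qed
  qed
  have dec: "lc_len (F n \<inter> {x. x < c}) + lc_len (F n \<inter> {x. d < x}) = lc_len (F n) - lc_len (F n \<inter> {x. c < x \<and> x < d})" for n
    using len_decomp[OF iv cd] .
  have "lc_sums (\<lambda>n. lc_len (F n) - lc_len (F n \<inter> {x. c < x \<and> x < d})) (s - t)" by (rule sums_diff[OF s t])
  hence "lc_sums (\<lambda>n. lc_len (F n \<inter> {x. x < c}) + lc_len (F n \<inter> {x. d < x})) (s - t)" unfolding dec .
  hence "lc_sums (\<lambda>n. if even n then lc_len (F (n div 2) \<inter> {x. x < c}) else lc_len (F (n div 2) \<inter> {x. d < x})) (s - t)"
    using len_nonneg iv0_lt[OF iv] iv0_gt[OF iv] by (intro interleave_sums) auto
  thus "lc_sums (\<lambda>n. lc_len (splitf F c d n)) (s - t)" unfolding splitf_def by (simp add: if_distrib)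
  show "x \<in> (\<Union>n. splitf F c d n) \<longleftrightarrow> x \<in> (\<Union>n. F n) \<and> (x < c \<or> d < x)"
  proof
    assume "x \<in> (\<Union>n. splitf F c d n)"
    then obtain n where "x \<in> splitf F c d n" by blast
    thus "x \<in> (\<Union>n. F n) \<and> (x < c \<or> d < x)" unfolding splitf_def by (auto split: if_splits)
  next
    assume h: "x \<in> (\<Union>n. F n) \<and> (x < c \<or> d < x)"
    then obtain n where n: "x \<in> F n" by blast
    show "x \<in> (\<Union>n. splitf F c d n)"
    proof (cases "x < c")
      case True
      hence "x \<in> splitf F c d (2 * n)" unfolding splitf_def using n by simp
      thus ?thesis by blast
    next
      case False
      hence "x \<in> splitf F c d (2 * n + 1)" unfolding splitf_def using n h by simp
      thus ?thesis by blast
    qed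
  qed
qed


lemma open_iv0:
  assumes "al \<le> be"
  shows "iv0 {x. al < x \<and> x < be}" "lc_len {x. al < x \<and> x < be} = be - al"
proof -
  have "iv0 {x. al < x \<and> x < be} \<and> lc_len {x. al < x \<and> x < be} = be - al"
  proof (cases "al = be")
    case True
    hence E: "{x. al < x \<and> x < be} = {}" by (auto dest: less_trans)
    show ?thesis unfolding E using True by (simp add: iv0_def)
  next
    case False
    hence lt: "al < be" using assms by simp
    have "{x. al < x \<and> x < be} = ivl al be False False" unfolding ivl_def by simp
    thus ?thesis using iv0_ivl[OF lt] len_ivl[OF lt] by simp
  qed
  thus "iv0 {x. al < x \<and> x < be}" "lc_len {x. al < x \<and> x < be} = be - al" by simp_all
qed

lemma inner_sub:
  assumes I: "lc_ivl_family I" and sub: "(\<Union>n. I n) \<subseteq> X" and s: "lc_sums (\<lambda>n. lc_len (I n)) s"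
    and K: "iv0 K"
  shows "\<exists>I' s'. lc_ivl_family I' \<and> (\<Union>n. I' n) \<subseteq> X - K \<and> lc_sums (\<lambda>n. lc_len (I' n)) s' \<and> s - lc_len K \<le> s'"
proof -
  define al where "al = epl K"
  define be where "be = eph K"
  have ab: "al \<le> be" unfolding al_def be_def using ep_le[OF K] .
  let ?O = "{x. al < x \<and> x < be}"
  have iv: "iv0 (I n)" for n using family_iv0[OF I] .
  obtain t where t: "lc_sums (\<lambda>n. lc_len (I n \<inter> ?O)) t"
    using sums_dominated[OF _ s, of "\<lambda>n. lc_len (I n \<inter> ?O)"] len_open_le[OF iv] len_open_nonneg[OF iv] by blast
  have pb: "lc_psum (\<lambda>n. lc_len (I n \<inter> ?O)) N \<le> be - al" for N
  proof -
    have "lc_psum (\<lambda>n. lc_len (I n \<inter> ?O)) N = (\<Sum>n\<in>{..<N}. lc_len (I n \<inter> ?O))" by (simp add: psum_eq)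
    also have "\<dots> \<le> lc_len ?O"
    proof (rule dsl_set)
      show "finite {..<N}" by simp
      show "iv0 ?O" using open_iv0[OF ab] by simp
      show "\<forall>i\<in>{..<N}. iv0 (I i \<inter> ?O) \<and> I i \<inter> ?O \<subseteq> ?O" using iv0_open[OF iv] by blast
      show "\<forall>i\<in>{..<N}. \<forall>j\<in>{..<N}. i \<noteq> j \<longrightarrow> I i \<inter> ?O \<inter> (I j \<inter> ?O) = {}"
        using I unfolding lc_ivl_family_def by blast
    qed
    also have "\<dots> = be - al" using open_iv0[OF ab] by simp
    finally show ?thesis .
  qed
  have tb: "t \<le> be - al"
    by (rule lc_tendsto_le[OF t[unfolded lc_sums_def] lc_tendsto_const, of 0]) (simp add: pb)
  note sp = split_family[OF I ab s t]
  show ?thesis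
  proof (intro exI conjI)
    show "lc_ivl_family (splitf I al be)" using sp(1) .
    show "lc_sums (\<lambda>n. lc_len (splitf I al be n)) (s - t)" using sp(2) .
    show "s - lc_len K \<le> s - t" using tb ep_len[OF K] unfolding al_def be_def by (simp add: diff_left_mono)
    show "(\<Union>n. splitf I al be n) \<subseteq> X - K"
    proof
      fix x assume "x \<in> (\<Union>n. splitf I al be n)"
      hence h: "x \<in> (\<Union>n. I n)" "x < al \<or> be < x" using sp(3)[of x] by simp_all
      have "x \<notin> K" using h(2) ep_mem[OF K, of x] unfolding al_def be_def by (auto simp: not_le[symmetric])
      thus "x \<in> X - K" using h(1) sub by blast
    qed
  qed
qed

lemma outer_sub:
  assumes J: "lc_ivl_family J" and cov: "X \<subseteq> (\<Union>n. J n)" and s: "lc_sums (\<lambda>n. lc_len (J n)) s"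
    and K: "iv0 K" and KX: "K \<subseteq> X" and eta: "0 < \<eta>"
  shows "\<exists>J' s'. lc_ivl_family J' \<and> X - K \<subseteq> (\<Union>n. J' n) \<and> lc_sums (\<lambda>n. lc_len (J' n)) s' \<and> s' \<le> s - lc_len K + \<eta>"
proof (cases "K = {}")
  case True
  thus ?thesis using J cov s eta by (intro exI[of _ J] exI[of _ s]) (auto simp: less_imp_le)
next
  case False
  define al where "al = epl K"
  define be where "be = eph K"
  have ab: "al < be" unfolding al_def be_def using ep_ne[OF K False] .
  have d: "0 < be - al" using ab by simp
  define h where "h = min (half \<eta>) (half (be - al))"
  define e' where "e' = half h"
  have h0: "0 < h" unfolding h_def using half_pos[OF eta] half_pos[OF d] by simp
  have e0: "0 < e'" unfolding e'_def using half_pos[OF h0] .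
  have ee: "e' + e' = h" unfolding e'_def by simp
  have hle: "h \<le> \<eta>" unfolding h_def using half_less[OF eta] by (simp add: min.coboundedI1 less_imp_le)
  have hlt: "h < be - al" unfolding h_def using half_less[OF d] by (meson min.cobounded2 order.strict_trans1)
  define a' where "a' = al + e'"
  define b' where "b' = be - e'"
  have a'b': "a' < b'"
  proof -
    have "al + (e' + e') < be" using hlt ee by (simp add: less_diff_eq add.commute)
    thus ?thesis unfolding a'_def b'_def by (simp add: less_diff_eq algebra_simps)
  qed
  have ala': "al < a'" unfolding a'_def using e0 by simp
  have b'be: "b' < be" unfolding b'_def using e0 by simp
  have iv: "iv0 (J n)" for n using family_iv0[OF J] .
  obtain s0 where s0: "lc_sums (\<lambda>m. lc_len (J m \<inter> {x. a' < x \<and> x < b'})) s0" "b' - a' \<le> s0"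
  proof -
    have "\<exists>s. lc_sums (\<lambda>m. lc_len (J m \<inter> {x. a' < x \<and> x < b'})) s \<and> b' - a' \<le> s"
    proof (rule core[OF a'b' _ iv s])
      fix x assume "a' < x" "x < b'"
      hence "al < x" "x < be" using ala' b'be by (auto dest: less_trans)
      hence "x \<in> K" using ep_open[OF K False] unfolding al_def be_def by blast
      thus "\<exists>m. x \<in> J m" using KX cov by blast
    qed
    thus ?thesis using that by blast
  qed
  note sp = split_family[OF J less_imp_le[OF a'b'] s s0(1)]
  show ?thesis
  proof (intro exI conjI)
    show "lc_ivl_family (splitf J a' b')" using sp(1) .
    show "lc_sums (\<lambda>n. lc_len (splitf J a' b' n)) (s - s0)" using sp(2) .
    have "s - s0 \<le> s - (b' - a')" using s0(2) by (rule diff_left_mono)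
    also have "b' - a' = (be - al) - h" unfolding a'_def b'_def ee[symmetric] by (simp add: algebra_simps)
    also have "s - ((be - al) - h) \<le> s - lc_len K + \<eta>"
      using hle ep_len[OF K] unfolding al_def be_def by (simp add: algebra_simps)
    finally show "s - s0 \<le> s - lc_len K + \<eta>" .
    show "X - K \<subseteq> (\<Union>n. splitf J a' b' n)"
    proof
      fix x assume x: "x \<in> X - K"
      have "\<not> (al < x \<and> x < be)" using x ep_open[OF K False] unfolding al_def be_def by blast
      hence "x \<le> al \<or> be \<le> x" by (auto simp: not_less)
      hence "x < a' \<or> b' < x"
      proof
        assume "x \<le> al" thus ?thesis using ala' by (blast intro: le_less_trans)
      next
        assume "be \<le> x" thus ?thesis using b'be by (blast intro: less_le_trans)
      qed
      moreover have "x \<in> (\<Union>n. J n)" using x cov by blast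
      ultimately show "x \<in> (\<Union>n. splitf J a' b' n)" using sp(3)[of x] by simp
    qed
  qed
qed


definition sumlen :: "lc set list \<Rightarrow> lc" where "sumlen Ks = sum_list (map lc_len Ks)"

fun dl :: "lc set list \<Rightarrow> bool" where
  "dl [] = True"
| "dl (K # Ks) = ((\<forall>K'\<in>set Ks. K \<inter> K' = {}) \<and> dl Ks)"

lemma sumlen_simps[simp]: "sumlen [] = 0" "sumlen (K # Ks) = lc_len K + sumlen Ks"
  unfolding sumlen_def by simp_all

lemma inner_iter:
  assumes I: "lc_ivl_family I" "(\<Union>n. I n) \<subseteq> A" "lc_sums (\<lambda>n. lc_len (I n)) s"
    and Ks: "\<forall>K\<in>set Ks. iv0 K"
  shows "\<exists>I' s'. lc_ivl_family I' \<and> (\<Union>n. I' n) \<subseteq> A - \<Union>(set Ks) \<and> lc_sums (\<lambda>n. lc_len (I' n)) s' \<and> s - sumlen Ks \<le> s'"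
  using Ks
proof (induction Ks)
  case Nil thus ?case using I by auto
next
  case (Cons K Ks)
  then obtain I1 s1 where I1: "lc_ivl_family I1" "(\<Union>n. I1 n) \<subseteq> A - \<Union>(set Ks)" "lc_sums (\<lambda>n. lc_len (I1 n)) s1"
    "s - sumlen Ks \<le> s1" by auto
  obtain I2 s2 where I2: "lc_ivl_family I2" "(\<Union>n. I2 n) \<subseteq> (A - \<Union>(set Ks)) - K" "lc_sums (\<lambda>n. lc_len (I2 n)) s2"
    "s1 - lc_len K \<le> s2"
    using inner_sub[OF I1(1-3), of K] Cons.prems by auto
  have "s - sumlen (K # Ks) \<le> s1 - lc_len K" using I1(4) by (simp add: algebra_simps)
  also have "\<dots> \<le> s2" by (rule I2(4))
  finally have "s - sumlen (K # Ks) \<le> s2" .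
  moreover have "(\<Union>n. I2 n) \<subseteq> A - \<Union>(set (K # Ks))" using I2(2) by auto
  ultimately show ?case using I2(1,3) by blast
qed

lemma outer_iter:
  assumes J: "lc_ivl_family J" "A \<subseteq> (\<Union>n. J n)" "lc_sums (\<lambda>n. lc_len (J n)) s"
    and Ks: "\<forall>K\<in>set Ks. iv0 K \<and> K \<subseteq> A" "dl Ks"
  shows "\<forall>\<epsilon>>0. \<exists>J' s'. lc_ivl_family J' \<and> A - \<Union>(set Ks) \<subseteq> (\<Union>n. J' n) \<and> lc_sums (\<lambda>n. lc_len (J' n)) s' \<and> s' \<le> s - sumlen Ks + \<epsilon>"
  using Ks
proof (induction Ks)
  case Nil
  show ?case
  proof (intro allI impI)
    fix \<epsilon> :: lc assume "0 < \<epsilon>"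
    thus "\<exists>J' s'. lc_ivl_family J' \<and> A - \<Union>(set []) \<subseteq> (\<Union>n. J' n) \<and> lc_sums (\<lambda>n. lc_len (J' n)) s' \<and> s' \<le> s - sumlen [] + \<epsilon>"
      using J by (intro exI[of _ J] exI[of _ s]) (auto simp: less_imp_le)
  qed
next
  case (Cons K Ks)
  show ?case
  proof (intro allI impI)
    fix \<epsilon> :: lc assume e: "0 < \<epsilon>"
    have h: "0 < half \<epsilon>" using half_pos[OF e] .
    obtain J1 s1 where J1: "lc_ivl_family J1" "A - \<Union>(set Ks) \<subseteq> (\<Union>n. J1 n)" "lc_sums (\<lambda>n. lc_len (J1 n)) s1"
      "s1 \<le> s - sumlen Ks + half \<epsilon>"
      using Cons.IH Cons.prems h by auto
    have KX: "K \<subseteq> A - \<Union>(set Ks)" using Cons.prems by auto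
    have ivK: "iv0 K" using Cons.prems by simp
    obtain J2 s2 where J2: "lc_ivl_family J2" "(A - \<Union>(set Ks)) - K \<subseteq> (\<Union>n. J2 n)" "lc_sums (\<lambda>n. lc_len (J2 n)) s2"
      "s2 \<le> s1 - lc_len K + half \<epsilon>"
      using outer_sub[OF J1(1-3) ivK KX h] by auto
    have "s2 \<le> s1 - lc_len K + half \<epsilon>" by (rule J2(4))
    also have "\<dots> \<le> (s - sumlen Ks + half \<epsilon>) - lc_len K + half \<epsilon>"
      using J1(4) by (intro add_right_mono diff_right_mono)
    also have "\<dots> = s - sumlen (K # Ks) + (half \<epsilon> + half \<epsilon>)"
      by (simp add: algebra_simps)
    also have "\<dots> = s - sumlen (K # Ks) + \<epsilon>" by simp
    finally have "s2 \<le> s - sumlen (K # Ks) + \<epsilon>" .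
    moreover have "A - \<Union>(set (K # Ks)) \<subseteq> (\<Union>n. J2 n)" using J2(2) by auto
    ultimately show "\<exists>J' s'. lc_ivl_family J' \<and> A - \<Union>(set (K # Ks)) \<subseteq> (\<Union>n. J' n) \<and> lc_sums (\<lambda>n. lc_len (J' n)) s' \<and> s' \<le> s - sumlen (K # Ks) + \<epsilon>"
      using J2(1,3) by blast
  qed
qed

lemma dl_map: "distinct xs \<Longrightarrow> (\<And>m n. m \<noteq> n \<Longrightarrow> K m \<inter> K n = {}) \<Longrightarrow> dl (map K xs)"
proof (induction xs)
  case (Cons a xs)
  have "K a \<inter> K y = {}" if "y \<in> set xs" for y
  proof -
    have "a \<noteq> y" using Cons.prems(1) that by auto
    thus ?thesis by (rule Cons.prems(2))
  qed
  thus ?case using Cons by simp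
qed simp

lemma sumlen_map: "sumlen (map K [0..<N]) = lc_psum (\<lambda>n. lc_len (K n)) N"
  unfolding sumlen_def by (induction N) (auto simp: add.commute)


lemma dl_append: "dl (L @ Cs) \<longleftrightarrow> dl L \<and> dl Cs \<and> (\<forall>X\<in>set L. \<forall>Y\<in>set Cs. X \<inter> Y = {})"
  by (induction L) auto

lemma dl_nth: "dl L \<Longrightarrow> i < j \<Longrightarrow> j < length L \<Longrightarrow> L ! i \<inter> L ! j = {}"
proof (induction L arbitrary: i j)
  case (Cons K L)
  show ?case
  proof (cases i)
    case 0
    hence "L ! (j - 1) \<in> set L" using Cons.prems by simp
    thus ?thesis using Cons.prems 0 by (cases j) auto
  next
    case (Suc i')
    then obtain j' where "j = Suc j'" using Cons.prems by (cases j) auto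
    thus ?thesis using Cons Suc by simp
  qed
qed simp

lemma sumlen_append: "sumlen (L @ Cs) = sumlen L + sumlen Cs" unfolding sumlen_def by simp

lemma stage:
  assumes A: "S_measurable A" and L: "\<forall>X\<in>set L. iv0 X \<and> X \<subseteq> A" "dl L" and e: "0 < \<epsilon>"
  shows "\<exists>Cs. (\<forall>X\<in>set (L @ Cs). iv0 X \<and> X \<subseteq> A) \<and> dl (L @ Cs) \<and> S_measure A - \<epsilon> \<le> sumlen (L @ Cs)"
proof -
  let ?m = "S_measure A"
  have h: "0 < half \<epsilon>" using half_pos[OF e] .
  obtain x where x: "x \<in> inner_sums A" "?m - half \<epsilon> \<le> x" using S_measure_approx(1)[OF A h] by blast
  obtain I where I: "lc_ivl_family I" "(\<Union>n. I n) \<subseteq> A" "lc_sums (\<lambda>n. lc_len (I n)) x"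
    using x(1) unfolding inner_sums_def by blast
  obtain I' s' where I': "lc_ivl_family I'" "(\<Union>n. I' n) \<subseteq> A - \<Union>(set L)" "lc_sums (\<lambda>n. lc_len (I' n)) s'"
    "x - sumlen L \<le> s'"
    using inner_iter[OF I, of L] L(1) by blast
  obtain P where P: "lc_abs (lc_psum (\<lambda>n. lc_len (I' n)) P - s') < half \<epsilon>"
    using I'(3) h unfolding lc_sums_def lc_tendsto_def by blast
  hence P': "s' - half \<epsilon> < lc_psum (\<lambda>n. lc_len (I' n)) P"
    unfolding lc_abs_less_iff by (simp add: algebra_simps)
  let ?Cs = "map I' [0..<P]"
  have dI': "I' m \<inter> I' n = {}" if "m \<noteq> n" for m n using I'(1) that unfolding lc_ivl_family_def by blast
  show ?thesis
  proof (intro exI[of _ ?Cs] conjI)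
    show "\<forall>X\<in>set (L @ ?Cs). iv0 X \<and> X \<subseteq> A" using L(1) I'(2) family_iv0[OF I'(1)] by auto
    have "X \<inter> Y = {}" if XL: "X \<in> set L" and YC: "Y \<in> set ?Cs" for X Y
    proof -
      obtain n where "Y = I' n" using YC by auto
      hence "Y \<subseteq> A - \<Union>(set L)" using I'(2) by blast
      thus ?thesis using XL by blast
    qed
    thus "dl (L @ ?Cs)" unfolding dl_append using L(2) dl_map[of "[0..<P]" I'] dI' by auto
    have "?m - \<epsilon> = (?m - half \<epsilon>) - half \<epsilon>" by (simp only: diff_diff_eq half_half)
    also have "\<dots> \<le> (x - sumlen L) + sumlen L - half \<epsilon>" using x(2) by simp
    also have "\<dots> \<le> s' + sumlen L - half \<epsilon>" using I'(4) by (simp add: diff_le_eq)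
    also have "\<dots> = sumlen L + (s' - half \<epsilon>)" by (simp add: algebra_simps)
    also have "\<dots> \<le> sumlen L + lc_psum (\<lambda>n. lc_len (I' n)) P"
      using less_imp_le[OF P'] by (rule add_left_mono)
    also have "\<dots> = sumlen (L @ ?Cs)" by (simp add: sumlen_append sumlen_map)
    finally show "?m - \<epsilon> \<le> sumlen (L @ ?Cs)" .
  qed
qed


definition stepC :: "lc set \<Rightarrow> lc set list \<Rightarrow> nat \<Rightarrow> lc set list" where
  "stepC A L k = (SOME Cs. (\<forall>X\<in>set (L @ Cs). iv0 X \<and> X \<subseteq> A) \<and> dl (L @ Cs) \<and>
      S_measure A - mon 1 (of_nat k) \<le> sumlen (L @ Cs))"

primrec pre :: "lc set \<Rightarrow> nat \<Rightarrow> lc set list" where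
  "pre A 0 = []"
| "pre A (Suc k) = pre A k @ stepC A (pre A k) k"

lemma pre_good:
  assumes "S_measurable A"
  shows "(\<forall>X\<in>set (pre A k). iv0 X \<and> X \<subseteq> A) \<and> dl (pre A k)"
proof (induction k)
  case (Suc k)
  have "\<exists>Cs. (\<forall>X\<in>set (pre A k @ Cs). iv0 X \<and> X \<subseteq> A) \<and> dl (pre A k @ Cs) \<and>
      S_measure A - mon 1 (of_nat k) \<le> sumlen (pre A k @ Cs)"
    using stage[OF assms _ _ mono_pos[of 1 "of_nat k"]] Suc by simp
  hence "(\<forall>X\<in>set (pre A k @ stepC A (pre A k) k). iv0 X \<and> X \<subseteq> A) \<and> dl (pre A k @ stepC A (pre A k) k) \<and>
      S_measure A - mon 1 (of_nat k) \<le> sumlen (pre A k @ stepC A (pre A k) k)"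
    unfolding stepC_def by (rule someI_ex)
  thus ?case by simp
qed simp

lemma pre_bound:
  assumes "S_measurable A"
  shows "S_measure A - mon 1 (of_nat k) \<le> sumlen (pre A (Suc k))"
proof -
  have "\<exists>Cs. (\<forall>X\<in>set (pre A k @ Cs). iv0 X \<and> X \<subseteq> A) \<and> dl (pre A k @ Cs) \<and>
      S_measure A - mon 1 (of_nat k) \<le> sumlen (pre A k @ Cs)"
    using stage[OF assms _ _ mono_pos[of 1 "of_nat k"]] pre_good[OF assms, of k] by simp
  hence "(\<forall>X\<in>set (pre A k @ stepC A (pre A k) k). iv0 X \<and> X \<subseteq> A) \<and> dl (pre A k @ stepC A (pre A k) k) \<and>
      S_measure A - mon 1 (of_nat k) \<le> sumlen (pre A k @ stepC A (pre A k) k)"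
    unfolding stepC_def by (rule someI_ex)
  thus ?thesis by simp
qed

lemma pre_prefix: "k \<le> k' \<Longrightarrow> \<exists>ys. pre A k' = pre A k @ ys"
proof (induction k' rule: dec_induct)
  case (step k')
  then obtain ys where "pre A k' = pre A k @ ys" by blast
  thus ?case by simp
qed simp

lemma pre_nth: "n < length (pre A k) \<Longrightarrow> k \<le> k' \<Longrightarrow> pre A k' ! n = pre A k ! n"
  using pre_prefix[of k k' A] by (auto simp: nth_append)

lemma pre_len_mono: "k \<le> k' \<Longrightarrow> length (pre A k) \<le> length (pre A k')"
  using pre_prefix[of k k' A] by auto

definition Kf :: "lc set \<Rightarrow> nat \<Rightarrow> lc set" where
  "Kf A n = (if \<exists>k. n < length (pre A k) then pre A (SOME k. n < length (pre A k)) ! n else {})"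

lemma Kf_eq: assumes "n < length (pre A k)" shows "Kf A n = pre A k ! n"
proof -
  have ex: "\<exists>k. n < length (pre A k)" using assms by blast
  define k0 where "k0 = (SOME k. n < length (pre A k))"
  have k0: "n < length (pre A k0)" unfolding k0_def using someI_ex[OF ex] .
  have "Kf A n = pre A k0 ! n" unfolding Kf_def k0_def using ex by simp
  also have "\<dots> = pre A (max k k0) ! n" using pre_nth[OF k0, of "max k k0"] by simp
  also have "\<dots> = pre A k ! n" using pre_nth[OF assms, of "max k k0"] by simp
  finally show ?thesis .
qed

lemma Kf_none: "\<not> (\<exists>k. n < length (pre A k)) \<Longrightarrow> Kf A n = {}" unfolding Kf_def by simp

lemma sumlen_pre: "sumlen (pre A k) = lc_psum (\<lambda>n. lc_len (Kf A n)) (length (pre A k))"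
proof -
  have "sumlen (pre A k) = (\<Sum>i = 0..<length (pre A k). map lc_len (pre A k) ! i)"
    unfolding sumlen_def sum_list_sum_nth by simp
  also have "\<dots> = (\<Sum>i<length (pre A k). lc_len (Kf A i))"
    using Kf_eq[of _ A k] by (intro sum.cong) auto
  finally show ?thesis by (simp add: psum_eq)
qed


lemma Kf_good:
  assumes "S_measurable A" shows "iv0 (Kf A n) \<and> Kf A n \<subseteq> A"
proof (cases "\<exists>k. n < length (pre A k)")
  case True
  then obtain k where k: "n < length (pre A k)" by blast
  hence "pre A k ! n \<in> set (pre A k)" by simp
  thus ?thesis using Kf_eq[OF k] pre_good[OF assms, of k] by simp
qed (simp add: Kf_none iv0_def)

lemma Kf_disj:
  assumes "S_measurable A" "m \<noteq> n" shows "Kf A m \<inter> Kf A n = {}"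
proof (cases "(\<exists>k. m < length (pre A k)) \<and> (\<exists>k. n < length (pre A k))")
  case True
  then obtain k1 k2 where k: "m < length (pre A k1)" "n < length (pre A k2)" by blast
  let ?k = "max k1 k2"
  have l: "m < length (pre A ?k)" "n < length (pre A ?k)"
    using k pre_len_mono[of k1 ?k A] pre_len_mono[of k2 ?k A] by auto
  have dl: "dl (pre A ?k)" using pre_good[OF assms(1)] by blast
  show ?thesis
  proof (cases "m < n")
    case True thus ?thesis using dl_nth[OF dl True l(2)] Kf_eq[OF l(1)] Kf_eq[OF l(2)] by simp
  next
    case False hence "n < m" using assms(2) by simp
    thus ?thesis using dl_nth[OF dl _ l(1)] Kf_eq[OF l(1)] Kf_eq[OF l(2)] by blast
  qed
next
  case False thus ?thesis using Kf_none by auto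
qed

lemma Kf_family: "S_measurable A \<Longrightarrow> lc_ivl_family (Kf A)"
  unfolding lc_ivl_family_def using Kf_good Kf_disj unfolding iv0_def by blast

lemma Kf_psum_le:
  assumes A: "S_measurable A" shows "lc_psum (\<lambda>n. lc_len (Kf A n)) N \<le> S_measure A"
proof -
  define T where "T n = (if n < N then Kf A n else {})" for n
  have "lc_ivl_family T" using Kf_family[OF A] unfolding lc_ivl_family_def T_def by auto
  moreover have "(\<Union>n. T n) \<subseteq> A" using Kf_good[OF A] unfolding T_def by auto
  moreover have "lc_sums (\<lambda>n. lc_len (T n)) (lc_psum (\<lambda>n. lc_len (T n)) N)"
    by (rule sums_finite) (simp add: T_def)
  moreover have "lc_psum (\<lambda>n. lc_len (T n)) N = lc_psum (\<lambda>n. lc_len (Kf A n)) N"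
    unfolding psum_eq T_def by (intro sum.cong) auto
  ultimately have "lc_psum (\<lambda>n. lc_len (Kf A n)) N \<in> inner_sums A" unfolding inner_sums_def by auto
  thus ?thesis using S_measure_props(1)[OF A] unfolding lc_is_sup_def by blast
qed

lemma Kf_psum_ge:
  assumes A: "S_measurable A" and e: "0 < \<epsilon>"
  shows "\<exists>N0. \<forall>n\<ge>N0. S_measure A - \<epsilon> < lc_psum (\<lambda>n. lc_len (Kf A n)) n"
proof -
  obtain k where k: "\<forall>j\<ge>k. mon 1 (of_nat j) < \<epsilon>" using mon_small[OF e] by blast
  let ?N0 = "length (pre A (Suc k))"
  have nn: "\<And>n. 0 \<le> lc_len (Kf A n)" using Kf_good[OF A] len_nonneg by blast
  show ?thesis
  proof (intro exI[of _ ?N0] allI impI)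
    fix n assume n: "?N0 \<le> n"
    have "S_measure A - \<epsilon> < S_measure A - mon 1 (of_nat k)" using k by (simp add: diff_strict_left_mono)
    also have "\<dots> \<le> sumlen (pre A (Suc k))" using pre_bound[OF A] .
    also have "\<dots> = lc_psum (\<lambda>n. lc_len (Kf A n)) ?N0" by (rule sumlen_pre)
    also have "\<dots> \<le> lc_psum (\<lambda>n. lc_len (Kf A n)) n" using psum_mono[OF nn n] .
    finally show "S_measure A - \<epsilon> < lc_psum (\<lambda>n. lc_len (Kf A n)) n" .
  qed
qed

lemma Kf_sums:
  assumes A: "S_measurable A" shows "lc_sums (\<lambda>n. lc_len (Kf A n)) (S_measure A)"
  unfolding lc_sums_def lc_tendsto_def
proof (intro allI impI)
  fix \<epsilon> :: lc assume e: "0 < \<epsilon>"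
  obtain N0 where N0: "\<forall>n\<ge>N0. S_measure A - \<epsilon> < lc_psum (\<lambda>n. lc_len (Kf A n)) n"
    using Kf_psum_ge[OF A e] by blast
  show "\<exists>N. \<forall>n\<ge>N. lc_abs (lc_psum (\<lambda>n. lc_len (Kf A n)) n - S_measure A) < \<epsilon>"
  proof (intro exI[of _ N0] allI impI)
    fix n assume n: "N0 \<le> n"
    have a: "lc_psum (\<lambda>n. lc_len (Kf A n)) n \<le> S_measure A" by (rule Kf_psum_le[OF A])
    have b: "S_measure A - \<epsilon> < lc_psum (\<lambda>n. lc_len (Kf A n)) n" using N0 n by blast
    show "lc_abs (lc_psum (\<lambda>n. lc_len (Kf A n)) n - S_measure A) < \<epsilon>"
      unfolding lc_abs_less_iff
    proof
      have "lc_psum (\<lambda>n. lc_len (Kf A n)) n - S_measure A \<le> 0" using a by simp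
      thus "lc_psum (\<lambda>n. lc_len (Kf A n)) n - S_measure A < \<epsilon>" using e by (rule le_less_trans)
      show "- (lc_psum (\<lambda>n. lc_len (Kf A n)) n - S_measure A) < \<epsilon>" using b by (simp add: algebra_simps)
    qed
  qed
qed

lemma rest_small:
  assumes A: "S_measurable A" and e: "0 < \<epsilon>"
  shows "\<exists>y\<in>outer_sums (A - (\<Union>n. Kf A n)). y \<le> \<epsilon>"
proof -
  let ?m = "S_measure A"
  define h where "h = half \<epsilon>"
  define h2 where "h2 = half h"
  have h0: "0 < h" unfolding h_def using half_pos[OF e] .
  have h20: "0 < h2" unfolding h2_def using half_pos[OF h0] .
  obtain y0 where y0: "y0 \<in> outer_sums A" "y0 \<le> ?m + h2" using S_measure_approx(2)[OF A h20] by blast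
  obtain J where J: "lc_ivl_family J" "A \<subseteq> (\<Union>n. J n)" "lc_sums (\<lambda>n. lc_len (J n)) y0"
    using y0(1) unfolding outer_sums_def by blast
  obtain N0 where N0: "\<forall>n\<ge>N0. ?m - h2 < lc_psum (\<lambda>n. lc_len (Kf A n)) n"
    using Kf_psum_ge[OF A h20] by blast
  let ?Ks = "map (Kf A) [0..<N0]"
  have Ks: "\<forall>K\<in>set ?Ks. iv0 K \<and> K \<subseteq> A" using Kf_good[OF A] by auto
  have dKs: "dl ?Ks" using dl_map[of "[0..<N0]" "Kf A"] Kf_disj[OF A] by simp
  obtain J' s' where J': "lc_ivl_family J'" "A - \<Union>(set ?Ks) \<subseteq> (\<Union>n. J' n)" "lc_sums (\<lambda>n. lc_len (J' n)) s'"
    "s' \<le> y0 - sumlen ?Ks + h"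
    using outer_iter[OF J Ks dKs] h0 by blast
  have "\<Union>(set ?Ks) \<subseteq> (\<Union>n. Kf A n)"
  proof (rule Union_least)
    fix X assume "X \<in> set ?Ks"
    then obtain i where "X = Kf A i" by auto
    thus "X \<subseteq> (\<Union>n. Kf A n)" by blast
  qed
  hence "A - (\<Union>n. Kf A n) \<subseteq> A - \<Union>(set ?Ks)" by (rule Diff_mono[OF order.refl])
  hence "A - (\<Union>n. Kf A n) \<subseteq> (\<Union>n. J' n)" using J'(2) by (rule order.trans)
  hence "s' \<in> outer_sums (A - (\<Union>n. Kf A n))" unfolding outer_sums_def using J'(1,3) by blast
  moreover have "s' \<le> \<epsilon>"
  proof -
    have p: "?m - h2 < sumlen ?Ks" using N0 sumlen_map[of "Kf A" N0] by simp
    have "s' \<le> y0 - sumlen ?Ks + h" by (rule J'(4))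
    also have "\<dots> \<le> (?m + h2) - (?m - h2) + h"
      using y0(2) less_imp_le[OF p] by (intro add_right_mono diff_mono)
    also have "\<dots> = (h2 + h2) + h" by (simp add: algebra_simps)
    also have "\<dots> = \<epsilon>" unfolding h2_def h_def by simp
    finally show ?thesis .
  qed
  ultimately show ?thesis by blast
qed

theorem theorem2p1:
  assumes "S_measurable A"
  shows "\<exists>K S. (\<forall>n. K n = {} \<or> lc_interval (K n)) \<and>
              (\<forall>m n. m \<noteq> n \<longrightarrow> K m \<inter> K n = {}) \<and>
              A = (\<Union>n. K n) \<union> S \<and> (\<Union>n. K n) \<inter> S = {} \<and>
              lc_sums (\<lambda>n. lc_len (K n)) (S_measure A) \<and>
              S_measurable S \<and> S_measure S = 0"
proof -
  let ?K = "Kf A"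
  let ?S = "A - (\<Union>n. Kf A n)"
  have fam: "lc_ivl_family ?K" using Kf_family[OF assms] .
  have sub: "(\<Union>n. ?K n) \<subseteq> A" using Kf_good[OF assms] by blast
  have zero_in: "0 \<in> inner_sums ?S"
  proof -
    have "lc_ivl_family (\<lambda>n. {})" unfolding lc_ivl_family_def by simp
    moreover have "lc_sums (\<lambda>n. lc_len ({}::lc set)) 0" using sums_zero by simp
    ultimately show ?thesis unfolding inner_sums_def by blast
  qed
  have outer_nonneg: "0 \<le> y" if yo: "y \<in> outer_sums ?S" for y
  proof -
    obtain J where J: "lc_ivl_family J" "lc_sums (\<lambda>n. lc_len (J n)) y"
      using yo unfolding outer_sums_def by blast
    show ?thesis using sums_nonneg[OF _ J(2)] len_nonneg[OF family_iv0[OF J(1)]] by blast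
  qed
  have le_eps: "z \<le> 0" if ze: "\<And>\<epsilon>. 0 < \<epsilon> \<Longrightarrow> z \<le> \<epsilon>" for z :: lc
  proof (rule ccontr)
    assume "\<not> z \<le> 0" hence z: "0 < z" by simp
    hence "z \<le> half z" using ze half_pos by blast
    thus False using half_less[OF z] by simp
  qed
  have meas: "S_measurable ?S" unfolding S_measurable_def
  proof (intro allI impI)
    fix \<epsilon> :: lc assume e: "0 < \<epsilon>"
    obtain y where y: "y \<in> outer_sums ?S" "y \<le> \<epsilon>" using rest_small[OF assms e] by blast
    show "\<exists>sI\<in>inner_sums ?S. \<exists>sJ\<in>outer_sums ?S. sJ - sI \<le> \<epsilon>"
    proof (intro bexI[OF _ zero_in] bexI[OF _ y(1)])
      show "y - 0 \<le> \<epsilon>" using y(2) by simp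
    qed
  qed
  have sup: "lc_is_sup (inner_sums ?S) 0" unfolding lc_is_sup_def
  proof (intro conjI ballI allI impI)
    fix x assume x: "x \<in> inner_sums ?S"
    show "x \<le> 0"
    proof (rule le_eps)
      fix \<epsilon> :: lc assume "0 < \<epsilon>"
      then obtain y where y: "y \<in> outer_sums ?S" "y \<le> \<epsilon>" using rest_small[OF assms] by blast
      have "x \<le> y" using inner_le_outer[OF x y(1)] .
      thus "x \<le> \<epsilon>" using y(2) by simp
    qed
  next
    fix u assume "\<forall>x\<in>inner_sums ?S. x \<le> u"
    thus "0 \<le> u" using zero_in by blast
  qed
  have inf: "lc_is_inf (outer_sums ?S) 0" unfolding lc_is_inf_def
  proof (intro conjI ballI allI impI)
    fix y assume "y \<in> outer_sums ?S" thus "0 \<le> y" by (rule outer_nonneg)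
  next
    fix u assume u: "\<forall>x\<in>outer_sums ?S. u \<le> x"
    show "u \<le> 0"
    proof (rule le_eps)
      fix \<epsilon> :: lc assume "0 < \<epsilon>"
      then obtain y where y: "y \<in> outer_sums ?S" "y \<le> \<epsilon>" using rest_small[OF assms] by blast
      thus "u \<le> \<epsilon>" using u by (meson order.trans)
    qed
  qed
  have "S_measure ?S = 0" using S_measure_eq[OF sup inf] .
  show ?thesis
  proof (intro exI[of _ ?K] exI[of _ ?S] conjI)
    show "\<forall>n. ?K n = {} \<or> lc_interval (?K n)" using fam unfolding lc_ivl_family_def by blast
    show "\<forall>m n. m \<noteq> n \<longrightarrow> ?K m \<inter> ?K n = {}" using fam unfolding lc_ivl_family_def by blast
    show "A = (\<Union>n. ?K n) \<union> ?S" using sub by blast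
    show "(\<Union>n. ?K n) \<inter> ?S = {}" by blast
    show "lc_sums (\<lambda>n. lc_len (?K n)) (S_measure A)" using Kf_sums[OF assms] .
    show "S_measurable ?S" using meas .
    show "S_measure ?S = 0" using \<open>S_measure ?S = 0\<close> .
  qed
qed


end
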